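(* For every $j\in\{1,2,3,4,5,6,7\}$ there exists a t-pair $(\mathcal{C},\psi)$ such that $\operatorname{typ}_u(\mathcal{C},\psi)=t_j$.
   Context: Let $\mathbb{N}=\{0,1,2,\dots\}$; for an integer $k\ge 2$ let $E_k=\{0,1,\dots,k-1\}$; let $\mathcal{P}(\mathbb{N})$ be the set of nonempty finite subsets of $\mathbb{N}$. Let $F$ be a nonempty set (of attribute names). A decision table $T\in\mathcal{M}_k(F)$ is a rectangular table with $n\ge 1$ columns labeled with attributes $f_1,\dots,f_n\in F$ (any two columns labeled with the same attribute are equal), whose rows are pairwise different tuples from $E_k^n$ (the set of rows may be empty), each row being labeled with a set of decisions from $\mathcal{P}(\mathbb{N})$. Write $At(T)=\{f_1,\dots,f_n\}$ and $\Delta(T)$ for the set of rows. For a word $\alpha=(f_{i_1},\delta_1)\cdots(f_{i_m},\delta_m)$ with $f_{i_j}\in At(T)$, $\delta_j\in E_k$, the subtable $T\alpha$ consists of the rows of $T$ having value $\delta_j$ in column $f_{i_j}$ for all $j$ ($T\lambda=T$ for the empty word $\lambda$). Operations on tables: (1) removal of a column from a table with at least two columns (if groups of equal rows appear, only the first row of each group, with its decision set, is kept); (2) changing of decisions: the decision sets attached to rows are replaced arbitrarily by sets from $\mathcal{P}(\mathbb{N})$; (3) permutation of columns: swap two columns together with their attribute labels; (4) duplication of columns: add a copy of a column (with its label) next to it. A set $\mathcal{C}\subseteq\mathcal{M}_k(F)$ is a closed class if every table obtained from a table of $\mathcal{C}$ by finitely many such operations belongs to $\mathcal{C}$. A decision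 tree over $\mathcal{M}_k(F)$ is a finite directed tree with a root (unique node with no entering edge) and at least two nodes such that the root and the edges leaving the root are unlabeled, each worker node (neither root nor terminal) is labeled with an attribute from $F$, each edge leaving a worker node is labeled with a number from $E_k$, and each terminal node is labeled with a number from $\mathbb{N}$. For a complete path $\xi$ (root to terminal node) whose worker nodes are labeled $f_{j_1},\dots,f_{j_m}$ in order, with the edges leaving them labeled $\delta_1,\dots,\delta_m$, put $\pi(\xi)=(f_{j_1},\delta_1)\cdots(f_{j_m},\delta_m)$, $\varphi(\xi)=f_{j_1}\cdots f_{j_m}$ (both empty if $m=0$), and let $\tau(\xi)$ be the label of its terminal node. A nondeterministic decision tree for $T$ is a decision tree $\Gamma$ whose worker-node attributes lie in $At(T)$, such that $\bigcup_{\xi}\Delta(T\pi(\xi))=\Delta(T)$ (union over complete paths), and for every row $r\in\Delta(T)$ and every complete path $\xi$ with $r\in\Delta(T\pi(\xi))$, $\tau(\xi)$ belongs to the decision set of $r$. A decision tree is deterministic if exactly one edge leaves the root and the edges leaving each worker node have pairwise different labels; a deterministic decision tree for $T$ is a deterministic decision tree that is a nondeterministic decision tree for $T$. A complexity measure over $\mathcal{M}_k(F)$ is any map $\psi:F^*\to\mathbb{N}$, where $F^*$ is the set of finite words over $F$ including the empty word $\lambda$. For a tree, $\psi(\Gamma)=\max_\xi\psi(\varphi(\xi))$ over complete paths. For $T$ with columns labeled $f_1,\dots,f_n$: $\psi^i(T)=\psi(f_1\cdots f_n)$, $\psi^d(T)$ is the minimum complexity of a deterministic decision tree for $T$, $\psi^a(T)$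 the minimum complexity of a nondeterministic decision tree for $T$. A t-pair $(\mathcal{C},\psi)$ consists of a closed class $\mathcal{C}\subseteq\mathcal{M}_k(F)$ and a complexity measure $\psi$ over $\mathcal{M}_k(F)$. For $b,c\in\{i,d,a\}$ define the partial function $\mathcal{U}^{bc}_{\mathcal{C}\psi}(n)=\max\{\psi^b(T):T\in\mathcal{C},\psi^c(T)\le n\}$ (defined iff this set is nonempty and finite). For a partial function $g:\mathbb{N}\to\mathbb{N}$ with domain $\mathrm{Dom}(g)$, let $\mathrm{Dom}^+(g)=\{n\in\mathrm{Dom}(g):g(n)\ge n\}$, $\mathrm{Dom}^-(g)=\{n\in\mathrm{Dom}(g):g(n)\le n\}$. Its type $\operatorname{typ}(g)$ is: $\alpha$ if $\mathrm{Dom}(g)$ is infinite and $g$ is bounded above; $\beta$ if $\mathrm{Dom}(g)$ is infinite, $\mathrm{Dom}^+(g)$ is finite and $g$ is unbounded above; $\gamma$ if $\mathrm{Dom}^+(g)$ and $\mathrm{Dom}^-(g)$ are both infinite; $\delta$ if $\mathrm{Dom}(g)$ is infinite and $\mathrm{Dom}^-(g)$ is finite; $\epsilon$ if $\mathrm{Dom}(g)$ is finite. The upper type $\operatorname{typ}_u(\mathcal{C},\psi)$ is the $3\times 3$ table with rows and columns indexed by $i,d,a$ (in this order) whose entry in row $b$, column $c$ is $\operatorname{typ}(\mathcal{U}^{bc}_{\mathcal{C}\psi})$. The tables $t_1,\dots,t_7$ are given row by row (rows $i,d,a$; entries in columns $i,d,a$): $t_1$: $i:(\alpha,\alpha,\alpha)$;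 $d:(\alpha,\alpha,\alpha)$; $a:(\alpha,\alpha,\alpha)$. $t_2$: $i:(\gamma,\epsilon,\epsilon)$; $d:(\alpha,\alpha,\alpha)$; $a:(\alpha,\alpha,\alpha)$. $t_3$: $i:(\gamma,\epsilon,\epsilon)$; $d:(\beta,\gamma,\epsilon)$; $a:(\alpha,\alpha,\alpha)$. $t_4$: $i:(\gamma,\epsilon,\epsilon)$; $d:(\gamma,\gamma,\epsilon)$; $a:(\alpha,\alpha,\alpha)$. $t_5$: $i:(\gamma,\epsilon,\epsilon)$; $d:(\gamma,\gamma,\gamma)$; $a:(\gamma,\gamma,\gamma)$. $t_6$: $i:(\gamma,\epsilon,\epsilon)$; $d:(\gamma,\gamma,\delta)$; $a:(\gamma,\gamma,\gamma)$. $t_7$: $i:(\gamma,\epsilon,\epsilon)$; $d:(\gamma,\gamma,\epsilon)$; $a:(\gamma,\gamma,\gamma)$. *)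

theory Defs
  imports Main
begin

text \<open>A decision table: a list of column attributes and a list of rows
(tuple, decision set). The order of rows matters for the column-removal
operation ("only the first row of each group is kept").\<close>

record 'f dtable =
  attrs :: "'f list"
  rows :: "(nat list \<times> nat set) list"

definition tuples :: "'f dtable \<Rightarrow> nat list set" where
  "tuples T = fst ` set (rows T)"

definition valid_table :: "nat \<Rightarrow> 'f dtable \<Rightarrow> bool" where
  "valid_table k T \<longleftrightarrow>
     attrs T \<noteq> [] \<and>
     distinct (map fst (rows T)) \<and>
     (\<forall>(r, D) \<in> set (rows T). length r = length (attrs T) \<and> (\<forall>x \<in> set r. x < k)
         \<and> finite D \<and> D \<noteq> {}) \<and>
     (\<forall>i < length (attrs T). \<forall>j < length (attrs T). attrs T ! i = attrs T ! j \<longrightarrow>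
         (\<forall>(r, D) \<in> set (rows T). r ! i = r ! j))"

definition del_nth :: "nat \<Rightarrow> 'a list \<Rightarrow> 'a list" where
  "del_nth i xs = take i xs @ drop (Suc i) xs"

definition dup_nth :: "nat \<Rightarrow> 'a list \<Rightarrow> 'a list" where
  "dup_nth i xs = take (Suc i) xs @ [xs ! i] @ drop (Suc i) xs"

definition swap_nth :: "nat \<Rightarrow> nat \<Rightarrow> 'a list \<Rightarrow> 'a list" where
  "swap_nth i j xs = xs[i := xs ! j, j := xs ! i]"

definition dedup_rows :: "(nat list \<times> nat set) list \<Rightarrow> (nat list \<times> nat set) list" where
  "dedup_rows xs = map (nth xs)
     (filter (\<lambda>i. \<forall>j < i. fst (xs ! j) \<noteq> fst (xs ! i)) [0..<length xs])"

definition remove_col :: "nat \<Rightarrow> 'f dtable \<Rightarrow> 'f dtable" where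
  "remove_col i T = \<lparr> attrs = del_nth i (attrs T),
     rows = dedup_rows (map (\<lambda>(r, D). (del_nth i r, D)) (rows T)) \<rparr>"

definition swap_col :: "nat \<Rightarrow> nat \<Rightarrow> 'f dtable \<Rightarrow> 'f dtable" where
  "swap_col i j T = \<lparr> attrs = swap_nth i j (attrs T),
     rows = map (\<lambda>(r, D). (swap_nth i j r, D)) (rows T) \<rparr>"

definition dup_col :: "nat \<Rightarrow> 'f dtable \<Rightarrow> 'f dtable" where
  "dup_col i T = \<lparr> attrs = dup_nth i (attrs T),
     rows = map (\<lambda>(r, D). (dup_nth i r, D)) (rows T) \<rparr>"

definition op_step :: "'f dtable \<Rightarrow> 'f dtable \<Rightarrow> bool" where
  "op_step T T' \<longleftrightarrow>
     (\<exists>i < length (attrs T). length (attrs T) \<ge> 2 \<and> T' = remove_col i T) \<or>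
     (\<exists>ds. length ds = length (rows T) \<and> (\<forall>D \<in> set ds. finite D \<and> D \<noteq> {}) \<and>
        T' = \<lparr> attrs = attrs T, rows = zip (map fst (rows T)) ds \<rparr>) \<or>
     (\<exists>i < length (attrs T). \<exists>j < length (attrs T). T' = swap_col i j T) \<or>
     (\<exists>i < length (attrs T). T' = dup_col i T)"

definition closed_class :: "nat \<Rightarrow> 'f dtable set \<Rightarrow> bool" where
  "closed_class k C \<longleftrightarrow> (\<forall>T \<in> C. valid_table k T) \<and>
     (\<forall>T \<in> C. \<forall>T'. op_step T T' \<longrightarrow> T' \<in> C)"

definition subtuples :: "'f dtable \<Rightarrow> ('f \<times> nat) list \<Rightarrow> nat list set" where
  "subtuples T \<alpha> = {r \<in> tuples T. \<forall>(f, \<delta>) \<in> set \<alpha>.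
       \<forall>i < length (attrs T). attrs T ! i = f \<longrightarrow> r ! i = \<delta>}"

text \<open>A decision
tree is the (nonempty) list of subtrees hanging below the unlabelled root.\<close>
datatype 'f dnode = Term nat | Work 'f "(nat \<times> 'f dnode) list"

type_synonym 'f dtree = "'f dnode list"

inductive wf_node :: "nat \<Rightarrow> 'f dnode \<Rightarrow> bool" for k where
  "wf_node k (Term d)"
| "es \<noteq> [] \<Longrightarrow> (\<forall>e. e \<in> set es \<longrightarrow> fst e < k \<and> wf_node k (snd e))
     \<Longrightarrow> wf_node k (Work f es)"

inductive det_node :: "'f dnode \<Rightarrow> bool" where
  "det_node (Term d)"
| "distinct (map fst es) \<Longrightarrow> (\<forall>e. e \<in> set es \<longrightarrow> det_node (snd e))
     \<Longrightarrow> det_node (Work f es)"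

inductive has_attr :: "'f dnode \<Rightarrow> 'f \<Rightarrow> bool" where
  "has_attr (Work f es) f"
| "(\<delta>, t) \<in> set es \<Longrightarrow> has_attr t g \<Longrightarrow> has_attr (Work f es) g"

inductive path :: "'f dnode \<Rightarrow> ('f \<times> nat) list \<Rightarrow> nat \<Rightarrow> bool" where
  "path (Term d) [] d"
| "(\<delta>, t) \<in> set es \<Longrightarrow> path t p d \<Longrightarrow> path (Work f es) ((f, \<delta>) # p) d"

definition cpath :: "'f dtree \<Rightarrow> ('f \<times> nat) list \<Rightarrow> nat \<Rightarrow> bool" where
  "cpath \<Gamma> p d \<longleftrightarrow> (\<exists>t \<in> set \<Gamma>. path t p d)"

definition is_dtree :: "nat \<Rightarrow> 'f dtree \<Rightarrow> bool" where
  "is_dtree k \<Gamma> \<longleftrightarrow> \<Gamma> \<noteq> [] \<and> (\<forall>t \<in> set \<Gamma>. wf_node k t)"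

definition is_deterministic :: "'f dtree \<Rightarrow> bool" where
  "is_deterministic \<Gamma> \<longleftrightarrow> length \<Gamma> = 1 \<and> (\<forall>t \<in> set \<Gamma>. det_node t)"

definition nondet_tree_for :: "nat \<Rightarrow> 'f dtable \<Rightarrow> 'f dtree \<Rightarrow> bool" where
  "nondet_tree_for k T \<Gamma> \<longleftrightarrow> is_dtree k \<Gamma> \<and>
     (\<forall>t \<in> set \<Gamma>. \<forall>f. has_attr t f \<longrightarrow> f \<in> set (attrs T)) \<and>
     \<Union> {subtuples T p | p d. cpath \<Gamma> p d} = tuples T \<and>
     (\<forall>(r, D) \<in> set (rows T). \<forall>p d. cpath \<Gamma> p d \<and> r \<in> subtuples T p \<longrightarrow> d \<in> D)"

definition det_tree_for :: "nat \<Rightarrow> 'f dtable \<Rightarrow> 'f dtree \<Rightarrow> bool" where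
  "det_tree_for k T \<Gamma> \<longleftrightarrow> is_deterministic \<Gamma> \<and> nondet_tree_for k T \<Gamma>"

definition psi_tree :: "('f list \<Rightarrow> nat) \<Rightarrow> 'f dtree \<Rightarrow> nat" where
  "psi_tree \<psi> \<Gamma> = Max {\<psi> (map fst p) | p d. cpath \<Gamma> p d}"

datatype cx = CI | CD | CA

definition psi_of :: "nat \<Rightarrow> ('f list \<Rightarrow> nat) \<Rightarrow> cx \<Rightarrow> 'f dtable \<Rightarrow> nat" where
  "psi_of k \<psi> b T = (case b of
      CI \<Rightarrow> \<psi> (attrs T)
    | CD \<Rightarrow> (LEAST m. \<exists>\<Gamma>. det_tree_for k T \<Gamma> \<and> psi_tree \<psi> \<Gamma> = m)
    | CA \<Rightarrow> (LEAST m. \<exists>\<Gamma>. nondet_tree_for k T \<Gamma> \<and> psi_tree \<psi> \<Gamma> = m))"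

definition U :: "nat \<Rightarrow> 'f dtable set \<Rightarrow> ('f list \<Rightarrow> nat) \<Rightarrow> cx \<Rightarrow> cx \<Rightarrow> nat \<Rightarrow> nat option" where
  "U k C \<psi> b c n = (let S = {psi_of k \<psi> b T | T. T \<in> C \<and> psi_of k \<psi> c T \<le> n} in
     if S \<noteq> {} \<and> finite S then Some (Max S) else None)"

definition pdom :: "(nat \<Rightarrow> nat option) \<Rightarrow> nat set" where
  "pdom g = {n. g n \<noteq> None}"
definition pdom_plus :: "(nat \<Rightarrow> nat option) \<Rightarrow> nat set" where
  "pdom_plus g = {n. \<exists>m. g n = Some m \<and> m \<ge> n}"
definition pdom_minus :: "(nat \<Rightarrow> nat option) \<Rightarrow> nat set" where
  "pdom_minus g = {n. \<exists>m. g n = Some m \<and> m \<le> n}"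
definition bdd_above_p :: "(nat \<Rightarrow> nat option) \<Rightarrow> bool" where
  "bdd_above_p g \<longleftrightarrow> (\<exists>B. \<forall>n m. g n = Some m \<longrightarrow> m \<le> B)"

datatype ftype = T\<alpha> | T\<beta> | T\<gamma> | T\<delta> | T\<epsilon>

definition has_typ :: "(nat \<Rightarrow> nat option) \<Rightarrow> ftype \<Rightarrow> bool" where
  "has_typ g t = (case t of
      T\<alpha> \<Rightarrow> infinite (pdom g) \<and> bdd_above_p g
    | T\<beta> \<Rightarrow> infinite (pdom g) \<and> finite (pdom_plus g) \<and> \<not> bdd_above_p g
    | T\<gamma> \<Rightarrow> infinite (pdom_plus g) \<and> infinite (pdom_minus g)
    | T\<delta> \<Rightarrow> infinite (pdom g) \<and> finite (pdom_minus g)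
    | T\<epsilon> \<Rightarrow> finite (pdom g))"

section \<open>The tables t_1, ..., t_7 (rows i,d,a; columns i,d,a)\<close>

definition row3 :: "ftype \<Rightarrow> ftype \<Rightarrow> ftype \<Rightarrow> cx \<Rightarrow> ftype" where
  "row3 x y z c = (case c of CI \<Rightarrow> x | CD \<Rightarrow> y | CA \<Rightarrow> z)"

definition ttab :: "nat \<Rightarrow> cx \<Rightarrow> cx \<Rightarrow> ftype" where
  "ttab j b = (case b of
      CI \<Rightarrow> (if j = 1 then row3 T\<alpha> T\<alpha> T\<alpha> else row3 T\<gamma> T\<epsilon> T\<epsilon>)
    | CD \<Rightarrow> (if j = 1 \<or> j = 2 then row3 T\<alpha> T\<alpha> T\<alpha>
             else if j = 3 then row3 T\<beta> T\<gamma> T\<epsilon>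
             else if j = 4 then row3 T\<gamma> T\<gamma> T\<epsilon>
             else if j = 5 then row3 T\<gamma> T\<gamma> T\<gamma>
             else if j = 6 then row3 T\<gamma> T\<gamma> T\<delta>
             else row3 T\<gamma> T\<gamma> T\<epsilon>)
    | CA \<Rightarrow> (if j \<le> 4 then row3 T\<alpha> T\<alpha> T\<alpha> else row3 T\<gamma> T\<gamma> T\<gamma>))"

end

theory Submission
  imports Defs
begin


definition trip :: "nat \<Rightarrow> nat set" where
  "trip p = {3*p, 3*p+1, 3*p+2}"

definition Rpat :: "nat list set" where
  "Rpat = {[0,0,0],[0,0,1],[1,1,1],[2,1,1],[1,0,2],[1,2,2]}"

definition patok :: "nat dtable \<Rightarrow> bool" where
  "patok T \<longleftrightarrow> (\<forall>r\<in>tuples T. \<exists>s\<in>Rpat. \<forall>i<length (attrs T). r!i = s!(attrs T!i mod 3))"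

definition CC :: "nat dtable set" where
  "CC = {T. valid_table 3 T \<and> (\<exists>p. set (attrs T) \<subseteq> trip p) \<and> patok T}"

lemma reindex:
  assumes v: "valid_table k T" and ne: "ids \<noteq> []" and ids: "set ids \<subseteq> {..<length (attrs T)}"
    and at: "attrs T' = map (nth (attrs T)) ids"
    and rw: "\<forall>(r',D')\<in>set (rows T'). finite D' \<and> D' \<noteq> {} \<and> (\<exists>(r,D)\<in>set (rows T). r' = map (nth r) ids)"
    and di: "distinct (map fst (rows T'))"
  shows "valid_table k T'"
    and "set (attrs T) \<subseteq> S \<Longrightarrow> set (attrs T') \<subseteq> S"
    and "patok T \<Longrightarrow> patok T'"
proof -
  have n: "\<And>r D. (r,D)\<in>set (rows T) \<Longrightarrow> length r = length (attrs T)"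
    using v unfolding valid_table_def by auto
  show "valid_table k T'"
    unfolding valid_table_def
  proof (intro conjI)
    show "attrs T' \<noteq> []" using at ne by simp
    show "distinct (map fst (rows T'))" by fact
    show "\<forall>(r, D)\<in>set (rows T'). length r = length (attrs T') \<and> (\<forall>x\<in>set r. x < k) \<and> finite D \<and> D \<noteq> {}"
    proof (clarify)
      fix r' D' assume a: "(r',D') \<in> set (rows T')"
      then obtain r D where rD: "(r,D)\<in>set (rows T)" "r' = map (nth r) ids" "finite D'" "D' \<noteq> {}"
        using rw by fastforce
      have lr: "length r = length (attrs T)" using n rD by blast
      have "\<forall>x\<in>set r'. x < k"
      proof
        fix x assume "x \<in> set r'"
        then obtain j where j: "j \<in> set ids" "x = r!j" using rD by auto
        hence "j < length r" using ids lr by auto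
        hence "x \<in> set r" using j by simp
        thus "x < k" using v rD unfolding valid_table_def by auto
      qed
      thus "length r' = length (attrs T') \<and> (\<forall>x\<in>set r'. x < k) \<and> finite D' \<and> D' \<noteq> {}"
        using rD at by simp
    qed
    show "\<forall>i<length (attrs T'). \<forall>j<length (attrs T'). attrs T' ! i = attrs T' ! j \<longrightarrow>
         (\<forall>(r, D)\<in>set (rows T'). r ! i = r ! j)"
    proof (clarify)
      fix i j r' D' assume i: "i < length (attrs T')" and j: "j < length (attrs T')"
        and e: "attrs T' ! i = attrs T' ! j" and a: "(r',D') \<in> set (rows T')"
      then obtain r D where rD: "(r,D)\<in>set (rows T)" "r' = map (nth r) ids"
        using rw by fastforce
      have ii: "ids!i < length (attrs T)" "ids!j < length (attrs T)" using i j at ids nth_mem by fastforce+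
      have "attrs T ! (ids!i) = attrs T ! (ids!j)" using e i j at by simp
      hence "r!(ids!i) = r!(ids!j)" using v rD ii unfolding valid_table_def by fastforce
      thus "r' ! i = r' ! j" using rD i j at by simp
    qed
  qed
  show "set (attrs T) \<subseteq> S \<Longrightarrow> set (attrs T') \<subseteq> S"
    using at ids by (auto intro!: nth_mem[THEN subsetD[rotated]] simp: subset_iff)
  show "patok T \<Longrightarrow> patok T'"
    unfolding patok_def
  proof
    fix r' assume p: "\<forall>r\<in>tuples T. \<exists>s\<in>Rpat. \<forall>i<length (attrs T). r ! i = s ! (attrs T ! i mod 3)"
      and r': "r' \<in> tuples T'"
    then obtain D' where "(r',D') \<in> set (rows T')" unfolding tuples_def by force
    then obtain r D where rD: "(r,D)\<in>set (rows T)" "r' = map (nth r) ids"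
      using rw by fastforce
    then obtain s where s: "s \<in> Rpat" "\<forall>i<length (attrs T). r ! i = s ! (attrs T ! i mod 3)"
      using p unfolding tuples_def by force
    have "\<forall>i<length (attrs T'). r' ! i = s ! (attrs T' ! i mod 3)"
    proof (intro allI impI)
      fix i assume i: "i < length (attrs T')"
      have "ids!i < length (attrs T)" using i at ids nth_mem by fastforce
      thus "r' ! i = s ! (attrs T' ! i mod 3)" using s rD i at by simp
    qed
    thus "\<exists>s\<in>Rpat. \<forall>i<length (attrs T'). r' ! i = s ! (attrs T' ! i mod 3)" using s by blast
  qed
qed

lemma del_nth_map: "del_nth i (map g xs) = map g (del_nth i xs)"
  unfolding del_nth_def by (simp add: take_map drop_map)
lemma dup_nth_map: "i < length xs \<Longrightarrow> dup_nth i (map g xs) = map g (dup_nth i xs)"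
  unfolding dup_nth_def by (simp add: take_map drop_map)
lemma swap_nth_map: "i < length xs \<Longrightarrow> j < length xs \<Longrightarrow> swap_nth i j (map g xs) = map g (swap_nth i j xs)"
  unfolding swap_nth_def by (simp add: map_update)

lemma del_nth_ids: "del_nth i xs = map (nth xs) (del_nth i [0..<length xs])"
  by (metis del_nth_map map_nth length_map)
lemma dup_nth_ids: "i < length xs \<Longrightarrow> dup_nth i xs = map (nth xs) (dup_nth i [0..<length xs])"
  by (metis dup_nth_map map_nth length_map length_upt minus_nat.diff_0)
lemma swap_nth_ids: "i < length xs \<Longrightarrow> j < length xs \<Longrightarrow> swap_nth i j xs = map (nth xs) (swap_nth i j [0..<length xs])"
  by (metis swap_nth_map map_nth length_map length_upt minus_nat.diff_0)

lemma set_del_nth: "set (del_nth i xs) \<subseteq> set xs"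
  unfolding del_nth_def using set_take_subset set_drop_subset by (metis Un_least set_append)
lemma set_dup_nth: "i < length xs \<Longrightarrow> set (dup_nth i xs) \<subseteq> set xs"
  unfolding dup_nth_def using set_take_subset set_drop_subset by fastforce
lemma set_swap_nth: "i < length xs \<Longrightarrow> j < length xs \<Longrightarrow> set (swap_nth i j xs) \<subseteq> set xs"
  unfolding swap_nth_def by (intro set_update_subsetI) (auto simp: nth_list_update)

lemma length_del_nth: "i < length xs \<Longrightarrow> length (del_nth i xs) = length xs - 1"
  unfolding del_nth_def by simp

lemma dedup_sub: "set (dedup_rows xs) \<subseteq> set xs"
  unfolding dedup_rows_def by auto

lemma dedup_distinct: "distinct (map fst (dedup_rows xs))"
proof -
  let ?L = "filter (\<lambda>i. \<forall>j < i. fst (xs ! j) \<noteq> fst (xs ! i)) [0..<length xs]"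
  have "map fst (dedup_rows xs) = map (\<lambda>i. fst (xs!i)) ?L"
    unfolding dedup_rows_def by simp
  moreover have "distinct (map (\<lambda>i. fst (xs!i)) ?L)"
  proof (rule distinct_map[THEN iffD2], intro conjI)
    show "distinct ?L" by simp
    show "inj_on (\<lambda>i. fst (xs ! i)) (set ?L)"
    proof (rule inj_onI)
      fix a b assume a: "a \<in> set ?L" and b: "b \<in> set ?L" and e: "fst (xs ! a) = fst (xs ! b)"
      show "a = b"
      proof (rule ccontr)
        assume "a \<noteq> b"
        hence "a < b \<or> b < a" by arith
        thus False using a b e by auto
      qed
    qed
  qed
  ultimately show ?thesis by simp
qed

lemma swap_swap: "i < length xs \<Longrightarrow> j < length xs \<Longrightarrow> swap_nth i j (swap_nth i j xs) = xs"
  unfolding swap_nth_def by (rule nth_equalityI) (auto simp: nth_list_update)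

lemma dup_inj: "i < length xs \<Longrightarrow> length ys = length xs \<Longrightarrow> dup_nth i xs = dup_nth i ys \<Longrightarrow> xs = ys"
proof -
  assume i: "i < length xs" and l: "length ys = length xs" and e: "dup_nth i xs = dup_nth i ys"
  have "take (Suc i) (dup_nth i xs) = take (Suc i) (dup_nth i ys)" using e by simp
  hence t: "take (Suc i) xs = take (Suc i) ys" using i l unfolding dup_nth_def by simp
  have "drop (Suc (Suc i)) (dup_nth i xs) = drop (Suc (Suc i)) (dup_nth i ys)" using e by simp
  hence d: "drop (Suc i) xs = drop (Suc i) ys" using i l unfolding dup_nth_def by simp
  show ?thesis using t d by (metis append_take_drop_id)
qed

lemma op_step_CC: assumes T: "T \<in> CC" and st: "op_step T T'" shows "T' \<in> CC"
proof -
  have v: "valid_table 3 T" and tr: "\<exists>p. set (attrs T) \<subseteq> trip p" and pk: "patok T"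
    using T unfolding CC_def by auto
  have n: "\<And>r D. (r,D)\<in>set (rows T) \<Longrightarrow> length r = length (attrs T)"
    and dec: "\<And>r D. (r,D)\<in>set (rows T) \<Longrightarrow> finite D \<and> D \<noteq> {}"
    using v unfolding valid_table_def by auto
  have dT: "distinct (map fst (rows T))" using v unfolding valid_table_def by auto
  let ?n = "length (attrs T)"
  have main: "T' \<in> CC" if ne: "ids \<noteq> []" and ids: "set ids \<subseteq> {..<?n}"
    and at: "attrs T' = map (nth (attrs T)) ids"
    and rw: "\<forall>(r',D')\<in>set (rows T'). finite D' \<and> D' \<noteq> {} \<and> (\<exists>(r,D)\<in>set (rows T). r' = map (nth r) ids)"
    and di: "distinct (map fst (rows T'))" for ids
    using reindex[OF v ne ids at rw di] tr pk unfolding CC_def by blast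
  from st show ?thesis unfolding op_step_def
  proof (elim disjE exE conjE)
    fix i assume i: "i < ?n" "2 \<le> ?n" "T' = remove_col i T"
    show ?thesis
    proof (rule main[of "del_nth i [0..<?n]"])
      show "del_nth i [0..<?n] \<noteq> []" using i length_del_nth[of i "[0..<?n]"] by auto
      show "set (del_nth i [0..<?n]) \<subseteq> {..<?n}" using set_del_nth by fastforce
      show "attrs T' = map (nth (attrs T)) (del_nth i [0..<?n])"
        using i by (simp add: remove_col_def del_nth_ids[symmetric])
      show "\<forall>(r',D')\<in>set (rows T'). finite D' \<and> D' \<noteq> {} \<and> (\<exists>(r,D)\<in>set (rows T). r' = map (nth r) (del_nth i [0..<?n]))"
      proof (clarify)
        fix r' D' assume "(r',D') \<in> set (rows T')"
        hence "(r',D') \<in> set (map (\<lambda>(r, D). (del_nth i r, D)) (rows T))"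
          using i dedup_sub[of "map (\<lambda>(r, D). (del_nth i r, D)) (rows T)"] unfolding remove_col_def by auto
        then obtain r where rD: "(r,D') \<in> set (rows T)" "r' = del_nth i r" by auto
        have "r' = map (nth r) (del_nth i [0..<?n])" using rD n del_nth_ids[of i r] by metis
        thus "finite D' \<and> D' \<noteq> {} \<and> (\<exists>(r,D)\<in>set (rows T). r' = map (nth r) (del_nth i [0..<?n]))"
          using rD dec by blast
      qed
      show "distinct (map fst (rows T'))" using i by (simp add: remove_col_def dedup_distinct)
    qed
  next
    fix ds assume d: "length ds = length (rows T)" "\<forall>D\<in>set ds. finite D \<and> D \<noteq> {}"
      "T' = \<lparr>attrs = attrs T, rows = zip (map fst (rows T)) ds\<rparr>"
    show ?thesis
    proof (rule main[of "[0..<?n]"])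
      show "[0..<?n] \<noteq> []" using v unfolding valid_table_def by simp
      show "set [0..<?n] \<subseteq> {..<?n}" by auto
      show "attrs T' = map (nth (attrs T)) [0..<?n]" using d by (simp add: map_nth)
      show "\<forall>(r',D')\<in>set (rows T'). finite D' \<and> D' \<noteq> {} \<and> (\<exists>(r,D)\<in>set (rows T). r' = map (nth r) [0..<?n])"
      proof (clarify)
        fix r' D' assume "(r',D') \<in> set (rows T')"
        hence a: "(r',D') \<in> set (zip (map fst (rows T)) ds)" using d by simp
        hence "D' \<in> set ds" by (meson set_zip_rightD)
        moreover from a have "r' \<in> set (map fst (rows T))" by (meson set_zip_leftD)
        then obtain D where "(r',D) \<in> set (rows T)" by auto
        ultimately show "finite D' \<and> D' \<noteq> {} \<and> (\<exists>(r,D)\<in>set (rows T). r' = map (nth r) [0..<?n])"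
        proof -
          fix D assume rD: "(r',D) \<in> set (rows T)" and Dd: "D' \<in> set ds"
          have "r' = map (nth r') [0..<?n]" using n[OF rD] by (metis map_nth)
          thus ?thesis using rD Dd d by blast
        qed
      qed
      show "distinct (map fst (rows T'))" using d dT by simp
    qed
  next
    fix i j assume i: "i < ?n" "j < ?n" "T' = swap_col i j T"
    show ?thesis
    proof (rule main[of "swap_nth i j [0..<?n]"])
      show "swap_nth i j [0..<?n] \<noteq> []" using i by (auto simp: swap_nth_def)
      show "set (swap_nth i j [0..<?n]) \<subseteq> {..<?n}" using set_swap_nth[of i "[0..<?n]" j] i by fastforce
      show "attrs T' = map (nth (attrs T)) (swap_nth i j [0..<?n])"
        using i by (simp add: swap_col_def swap_nth_ids[symmetric])
      show "\<forall>(r',D')\<in>set (rows T'). finite D' \<and> D' \<noteq> {} \<and> (\<exists>(r,D)\<in>set (rows T). r' = map (nth r) (swap_nth i j [0..<?n]))"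
      proof (clarify)
        fix r' D' assume "(r',D') \<in> set (rows T')"
        then obtain r where rD: "(r,D') \<in> set (rows T)" "r' = swap_nth i j r"
          using i unfolding swap_col_def by auto
        have "r' = map (nth r) (swap_nth i j [0..<?n])" using rD n swap_nth_ids[of i r j] i by metis
        thus "finite D' \<and> D' \<noteq> {} \<and> (\<exists>(r,D)\<in>set (rows T). r' = map (nth r) (swap_nth i j [0..<?n]))"
          using rD dec by blast
      qed
      have "map fst (rows T') = map (swap_nth i j) (map fst (rows T))"
        using i unfolding swap_col_def by (simp add: case_prod_beta')
      moreover have "inj_on (swap_nth i j) (set (map fst (rows T)))"
      proof (rule inj_onI)
        fix x y assume x: "x \<in> set (map fst (rows T))" and y: "y \<in> set (map fst (rows T))"
          and e: "swap_nth i j x = swap_nth i j y"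
        have lx: "length x = ?n" and ly: "length y = ?n" using x y n by auto
        have "swap_nth i j (swap_nth i j x) = swap_nth i j (swap_nth i j y)" using e by simp
        thus "x = y" using swap_swap[of i x j] swap_swap[of i y j] lx ly i by simp
      qed
      ultimately show "distinct (map fst (rows T'))" using dT by (simp only: distinct_map set_map)
    qed
  next
    fix i assume i: "i < ?n" "T' = dup_col i T"
    show ?thesis
    proof (rule main[of "dup_nth i [0..<?n]"])
      show "dup_nth i [0..<?n] \<noteq> []" using i by (auto simp: dup_nth_def)
      show "set (dup_nth i [0..<?n]) \<subseteq> {..<?n}" using set_dup_nth[of i "[0..<?n]"] i by fastforce
      show "attrs T' = map (nth (attrs T)) (dup_nth i [0..<?n])"
        using i by (simp add: dup_col_def dup_nth_ids[symmetric])
      show "\<forall>(r',D')\<in>set (rows T'). finite D' \<and> D' \<noteq> {} \<and> (\<exists>(r,D)\<in>set (rows T). r' = map (nth r) (dup_nth i [0..<?n]))"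
      proof (clarify)
        fix r' D' assume "(r',D') \<in> set (rows T')"
        then obtain r where rD: "(r,D') \<in> set (rows T)" "r' = dup_nth i r"
          using i unfolding dup_col_def by auto
        have "r' = map (nth r) (dup_nth i [0..<?n])" using rD n dup_nth_ids[of i r] i by metis
        thus "finite D' \<and> D' \<noteq> {} \<and> (\<exists>(r,D)\<in>set (rows T). r' = map (nth r) (dup_nth i [0..<?n]))"
          using rD dec by blast
      qed
      have "map fst (rows T') = map (dup_nth i) (map fst (rows T))"
        using i unfolding dup_col_def by (simp add: case_prod_beta')
      moreover have "inj_on (dup_nth i) (set (map fst (rows T)))"
      proof (rule inj_onI)
        fix x y assume x: "x \<in> set (map fst (rows T))" and y: "y \<in> set (map fst (rows T))"
          and e: "dup_nth i x = dup_nth i y"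
        have lx: "length x = ?n" and ly: "length y = ?n" using x y n by auto
        thus "x = y" using dup_inj[OF _ _ e] i by simp
      qed
      ultimately show "distinct (map fst (rows T'))" using dT by (simp only: distinct_map set_map)
    qed
  qed
qed

lemma closed_CC: "closed_class 3 CC"
  unfolding closed_class_def using op_step_CC CC_def by blast


lemma path_Term: "path (Term d) p d' \<longleftrightarrow> p = [] \<and> d' = d"
proof
  assume "path (Term d) p d'" thus "p = [] \<and> d' = d" by (cases rule: path.cases) auto
qed (auto intro: path.intros)
lemma path_Work: "path (Work f es) p d \<longleftrightarrow> (\<exists>\<delta> t p'. (\<delta>,t) \<in> set es \<and> p = (f,\<delta>)#p' \<and> path t p' d)"
proof
  assume "path (Work f es) p d" thus "\<exists>\<delta> t p'. (\<delta>,t) \<in> set es \<and> p = (f,\<delta>)#p' \<and> path t p' d"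
    by (cases rule: path.cases) auto
qed (auto intro: path.intros)
lemma wf_Term: "wf_node k (Term d)" by (rule wf_node.intros)
lemma wf_Work: "wf_node k (Work f es) \<longleftrightarrow> es \<noteq> [] \<and> (\<forall>e\<in>set es. fst e < k \<and> wf_node k (snd e))"
proof
  assume "wf_node k (Work f es)" thus "es \<noteq> [] \<and> (\<forall>e\<in>set es. fst e < k \<and> wf_node k (snd e))"
    by (cases rule: wf_node.cases) auto
qed (auto intro: wf_node.intros)
lemma has_attr_Term: "\<not> has_attr (Term d) g"
proof
  assume "has_attr (Term d) g" thus False by (cases rule: has_attr.cases)
qed
lemma has_attr_Work: "has_attr (Work f es) g \<longleftrightarrow> g = f \<or> (\<exists>(\<delta>,t)\<in>set es. has_attr t g)"
proof
  assume "has_attr (Work f es) g" thus "g = f \<or> (\<exists>(\<delta>,t)\<in>set es. has_attr t g)"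
    by (cases rule: has_attr.cases) auto
qed (auto intro: has_attr.intros)
lemma det_Term: "det_node (Term d)" by (rule det_node.intros)
lemma det_Work: "det_node (Work f es) \<longleftrightarrow> distinct (map fst es) \<and> (\<forall>e\<in>set es. det_node (snd e))"
proof
  assume "det_node (Work f es)" thus "distinct (map fst es) \<and> (\<forall>e\<in>set es. det_node (snd e))"
    by (cases rule: det_node.cases) auto
qed (auto intro: det_node.intros)

fun paths :: "'f dnode \<Rightarrow> (('f \<times> nat) list \<times> nat) list" where
  "paths (Term d) = [([], d)]"
| "paths (Work f es) = concat (map (\<lambda>e. map (\<lambda>x. ((f, fst e) # fst x, snd x)) (paths (snd e))) es)"

lemma path_paths: "path t p d \<longleftrightarrow> (p,d) \<in> set (paths t)"
proof (induction t arbitrary: p d rule: paths.induct)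
  case (1 d)
  then show ?case by (auto simp: path_Term)
next
  case (2 f es)
  show ?case
  proof
    assume "path (Work f es) p d"
    then obtain \<delta> t p' where a: "(\<delta>,t) \<in> set es" "p = (f,\<delta>)#p'" "path t p' d"
      by (auto simp: path_Work)
    hence "(p',d) \<in> set (paths t)" using 2[of "(\<delta>,t)"] by auto
    thus "(p,d) \<in> set (paths (Work f es))" using a by force
  next
    assume "(p,d) \<in> set (paths (Work f es))"
    then obtain e x where a: "e \<in> set es" "x \<in> set (paths (snd e))" "p = (f, fst e) # fst x" "d = snd x"
      by auto
    hence "path (snd e) (fst x) d" using 2[of e] by auto
    thus "path (Work f es) p d" using a by (auto simp: path_Work intro!: exI[of _ "fst e"] exI[of _ "snd e"])
  qed
qed

lemma finite_cpath: "finite {(p,d). cpath \<Gamma> p d}"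
proof -
  have "{(p,d). cpath \<Gamma> p d} \<subseteq> (\<Union>t\<in>set \<Gamma>. set (paths t))"
    unfolding cpath_def by (auto simp: path_paths)
  thus ?thesis by (rule finite_subset) auto
qed

lemma psi_set_eq: "{\<psi> (map fst p) | p d. cpath \<Gamma> p d} = (\<lambda>(p,d). \<psi> (map fst p)) ` {(p,d). cpath \<Gamma> p d}"
  by auto

lemma psi_tree_ge: "cpath \<Gamma> p d \<Longrightarrow> \<psi> (map fst p) \<le> psi_tree \<psi> \<Gamma>"
  unfolding psi_tree_def psi_set_eq
  by (rule Max_ge) (auto intro: finite_cpath)

lemma psi_tree_le: "cpath \<Gamma> p0 d0 \<Longrightarrow> (\<And>p d. cpath \<Gamma> p d \<Longrightarrow> \<psi> (map fst p) \<le> m) \<Longrightarrow> psi_tree \<psi> \<Gamma> \<le> m"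
  unfolding psi_tree_def psi_set_eq
  by (rule Max.boundedI) (auto intro: finite_cpath)

lemma wf_path_ex: "wf_node k t \<Longrightarrow> \<exists>p d. path t p d"
proof (induction rule: wf_node.induct)
  case (1 d) thus ?case by (auto simp: path_Term)
next
  case (2 es f)
  then obtain e where "e \<in> set es" by (cases es) auto
  with 2 obtain p d where "path (snd e) p d" by blast
  hence "path (Work f es) ((f, fst e) # p) d" using \<open>e \<in> set es\<close> by (cases e) (auto simp: path_Work)
  thus ?case by blast
qed

lemma path_attr: "path t p d \<Longrightarrow> x \<in> set p \<Longrightarrow> has_attr t (fst x)"
  by (induction rule: path.induct) (auto intro: has_attr.intros)

definition vof :: "'f dtable \<Rightarrow> nat list \<Rightarrow> 'f \<Rightarrow> nat" where
  "vof T r f = r ! (SOME i. i < length (attrs T) \<and> attrs T ! i = f)"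

lemma tuplesE: "r \<in> tuples T \<Longrightarrow> (\<And>D. (r,D) \<in> set (rows T) \<Longrightarrow> P) \<Longrightarrow> P"
  unfolding tuples_def by force

lemma vof: assumes v: "valid_table k T" and r: "r \<in> tuples T" and i: "i < length (attrs T)"
  and f: "attrs T ! i = f" shows "r ! i = vof T r f"
proof -
  let ?j = "SOME i. i < length (attrs T) \<and> attrs T ! i = f"
  have j: "?j < length (attrs T) \<and> attrs T ! ?j = f" using i f by (metis (mono_tags, lifting) someI)
  obtain D where "(r,D) \<in> set (rows T)" using r by (rule tuplesE)
  hence "r ! i = r ! ?j" using v i j f unfolding valid_table_def by fastforce
  thus ?thesis unfolding vof_def .
qed

lemma tuple_len: "valid_table k T \<Longrightarrow> r \<in> tuples T \<Longrightarrow> length r = length (attrs T)"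
  unfolding valid_table_def by (auto elim: tuplesE)

lemma vof_lt: assumes v: "valid_table k T" and r: "r \<in> tuples T" and f: "f \<in> set (attrs T)"
  shows "vof T r f < k"
proof -
  obtain i where i: "i < length (attrs T)" "attrs T ! i = f" using f by (auto simp: in_set_conv_nth)
  hence "vof T r f = r ! i" using vof[OF v r] by simp
  moreover have "r ! i \<in> set r" using i tuple_len[OF v r] by simp
  moreover obtain D where "(r,D) \<in> set (rows T)" using r by (rule tuplesE)
  ultimately show ?thesis using v unfolding valid_table_def by fastforce
qed

lemma subtuples_iff: assumes v: "valid_table k T"
  shows "r \<in> subtuples T p \<longleftrightarrow> r \<in> tuples T \<and> (\<forall>(f,\<delta>)\<in>set p. f \<in> set (attrs T) \<longrightarrow> vof T r f = \<delta>)"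
proof -
  have eq: "(\<forall>i<length (attrs T). attrs T ! i = f \<longrightarrow> r ! i = \<delta>) \<longleftrightarrow> (f \<in> set (attrs T) \<longrightarrow> vof T r f = \<delta>)"
    if r: "r \<in> tuples T" for f \<delta>
    using vof[OF v r] by (auto simp: in_set_conv_nth)
  show ?thesis
  proof
    assume a: "r \<in> subtuples T p"
    hence r: "r \<in> tuples T" unfolding subtuples_def by auto
    have "\<forall>(f,\<delta>)\<in>set p. \<forall>i<length (attrs T). attrs T ! i = f \<longrightarrow> r ! i = \<delta>"
      using a unfolding subtuples_def by blast
    thus "r \<in> tuples T \<and> (\<forall>(f,\<delta>)\<in>set p. f \<in> set (attrs T) \<longrightarrow> vof T r f = \<delta>)"
      using r by (simp add: eq[OF r])
  next
    assume a: "r \<in> tuples T \<and> (\<forall>(f,\<delta>)\<in>set p. f \<in> set (attrs T) \<longrightarrow> vof T r f = \<delta>)"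
    hence r: "r \<in> tuples T" by simp
    hence "\<forall>(f,\<delta>)\<in>set p. \<forall>i<length (attrs T). attrs T ! i = f \<longrightarrow> r ! i = \<delta>"
      using a by (simp add: eq[OF r])
    thus "r \<in> subtuples T p" unfolding subtuples_def using r by blast
  qed
qed

lemma subtuples_sub: "subtuples T p \<subseteq> tuples T" unfolding subtuples_def by auto

lemma tuple_eq: assumes v: "valid_table k T" and r: "r \<in> tuples T" and r': "r' \<in> tuples T"
  and e: "\<forall>f\<in>set (attrs T). vof T r f = vof T r' f" shows "r = r'"
proof (rule nth_equalityI)
  show "length r = length r'" using tuple_len[OF v r] tuple_len[OF v r'] by simp
  fix i assume "i < length r"
  hence i: "i < length (attrs T)" using tuple_len[OF v r] by simp
  show "r ! i = r' ! i" using vof[OF v r i refl] vof[OF v r' i refl] e i by simp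
qed

definition lab :: "'f dtable \<Rightarrow> ('f \<times> nat) list \<Rightarrow> nat" where
  "lab T p = (SOME d. \<forall>(r,D)\<in>set (rows T). r \<in> subtuples T p \<longrightarrow> d \<in> D)"

definition good :: "'f dtable \<Rightarrow> ('f \<times> nat) list \<Rightarrow> bool" where
  "good T p \<longleftrightarrow> (\<forall>r\<in>subtuples T p. \<forall>r'\<in>subtuples T p. r = r')"

lemma lab_ok: assumes v: "valid_table k T" and g: "good T p" and rD: "(r,D) \<in> set (rows T)"
  and s: "r \<in> subtuples T p" shows "lab T p \<in> D"
proof -
  have dist: "distinct (map fst (rows T))" and ne: "D \<noteq> {}" using v rD unfolding valid_table_def by auto
  obtain d where d: "d \<in> D" using ne by blast
  have "\<forall>(r',D')\<in>set (rows T). r' \<in> subtuples T p \<longrightarrow> d \<in> D'"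
  proof (clarify)
    fix r' D' assume a: "(r',D') \<in> set (rows T)" "r' \<in> subtuples T p"
    hence "r' = r" using g s unfolding good_def by blast
    hence "D' = D" using a rD dist by (metis eq_key_imp_eq_value)
    thus "d \<in> D'" using d by simp
  qed
  hence "\<forall>(r',D')\<in>set (rows T). r' \<in> subtuples T p \<longrightarrow> lab T p \<in> D'"
    unfolding lab_def by (rule someI)
  thus ?thesis using rD s by blast
qed

lemma nondet_intro:
  assumes v: "valid_table k T" and ne: "\<Gamma> \<noteq> []" and wf: "\<forall>t\<in>set \<Gamma>. wf_node k t"
    and at: "\<forall>t\<in>set \<Gamma>. \<forall>f. has_attr t f \<longrightarrow> f \<in> set (attrs T)"
    and cov: "\<forall>r\<in>tuples T. \<exists>p d. cpath \<Gamma> p d \<and> r \<in> subtuples T p"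
    and gd: "\<forall>p d. cpath \<Gamma> p d \<longrightarrow> good T p \<and> d = lab T p"
  shows "nondet_tree_for k T \<Gamma>"
  unfolding nondet_tree_for_def is_dtree_def
proof (intro conjI)
  show "\<Union> {subtuples T p | p d. cpath \<Gamma> p d} = tuples T"
  proof
    show "\<Union> {subtuples T p | p d. cpath \<Gamma> p d} \<subseteq> tuples T" using subtuples_sub by blast
    show "tuples T \<subseteq> \<Union> {subtuples T p | p d. cpath \<Gamma> p d}"
    proof
      fix r assume "r \<in> tuples T"
      then obtain p d where "cpath \<Gamma> p d" "r \<in> subtuples T p" using cov by blast
      thus "r \<in> \<Union> {subtuples T p | p d. cpath \<Gamma> p d}" by blast
    qed
  qed
  show "\<forall>(r, D)\<in>set (rows T). \<forall>p d. cpath \<Gamma> p d \<and> r \<in> subtuples T p \<longrightarrow> d \<in> D"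
  proof (clarify)
    fix r D p d assume a: "(r,D) \<in> set (rows T)" "cpath \<Gamma> p d" "r \<in> subtuples T p"
    hence "good T p" "d = lab T p" using gd by auto
    thus "d \<in> D" using lab_ok[OF v _ a(1) a(3)] by simp
  qed
qed (use ne wf at in auto)

fun full :: "nat \<Rightarrow> 'f list \<Rightarrow> (('f\<times>nat) list \<Rightarrow> nat) \<Rightarrow> 'f dnode" where
  "full k [] L = Term (L [])"
| "full k (f#fs) L = Work f (map (\<lambda>v. (v, full k fs (\<lambda>p. L ((f,v)#p)))) [0..<k])"

lemma path_full: "path (full k fs L) p d \<longleftrightarrow> map fst p = fs \<and> (\<forall>x\<in>set p. snd x < k) \<and> d = L p"
proof (induction fs arbitrary: L p)
  case Nil
  then show ?case by (auto simp: path_Term)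
next
  case (Cons f fs)
  show ?case
  proof
    assume "path (full k (f # fs) L) p d"
    then obtain v p' where "v < k" "p = (f,v)#p'" "path (full k fs (\<lambda>p. L ((f,v)#p))) p' d"
      by (auto simp: path_Work)
    thus "map fst p = f # fs \<and> (\<forall>x\<in>set p. snd x < k) \<and> d = L p" using Cons by auto
  next
    assume a: "map fst p = f # fs \<and> (\<forall>x\<in>set p. snd x < k) \<and> d = L p"
    then obtain v p' where p: "p = (f,v)#p'" by (cases p) auto
    hence pp: "path (full k fs (\<lambda>p. L ((f,v)#p))) p' d" using Cons a by auto
    have "v < k" using a p by auto
    hence "(v, full k fs (\<lambda>p. L ((f,v)#p))) \<in> set (map (\<lambda>v. (v, full k fs (\<lambda>p. L ((f,v)#p)))) [0..<k])"
      by auto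
    thus "path (full k (f # fs) L) p d" using p pp unfolding full.simps path_Work by blast
  qed
qed

lemma wf_full: "0 < k \<Longrightarrow> wf_node k (full k fs L)"
  by (induction fs arbitrary: L) (auto simp: wf_Work wf_Term)
lemma det_full: "det_node (full k fs L)"
  by (induction fs arbitrary: L) (auto simp: det_Work det_Term comp_def)
lemma attr_full: "has_attr (full k fs L) g \<Longrightarrow> g \<in> set fs"
  by (induction fs arbitrary: L) (auto simp: has_attr_Work has_attr_Term)

fun chain :: "('f\<times>nat) list \<Rightarrow> nat \<Rightarrow> 'f dnode" where
  "chain [] d = Term d"
| "chain (x#xs) d = Work (fst x) [(snd x, chain xs d)]"

lemma path_chain: "path (chain ps d) p d' \<longleftrightarrow> p = ps \<and> d' = d"
  by (induction ps arbitrary: p) (auto simp: path_Term path_Work)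
lemma wf_chain: "\<forall>x\<in>set ps. snd x < k \<Longrightarrow> wf_node k (chain ps d)"
  by (induction ps) (auto simp: wf_Work wf_Term)
lemma attr_chain: "has_attr (chain ps d) g \<Longrightarrow> g \<in> fst ` set ps"
  by (induction ps) (auto simp: has_attr_Work has_attr_Term)


lemma psiD_le: "det_tree_for k T \<Gamma> \<Longrightarrow> psi_of k \<psi> CD T \<le> psi_tree \<psi> \<Gamma>"
  unfolding psi_of_def by simp (rule Least_le, blast)
lemma psiA_le: "nondet_tree_for k T \<Gamma> \<Longrightarrow> psi_of k \<psi> CA T \<le> psi_tree \<psi> \<Gamma>"
  unfolding psi_of_def by simp (rule Least_le, blast)
lemma psiD_att: "det_tree_for k T \<Gamma>0 \<Longrightarrow> \<exists>\<Gamma>. det_tree_for k T \<Gamma> \<and> psi_tree \<psi> \<Gamma> = psi_of k \<psi> CD T"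
  unfolding psi_of_def by simp (rule LeastI_ex, blast)
lemma psiA_att: "nondet_tree_for k T \<Gamma>0 \<Longrightarrow> \<exists>\<Gamma>. nondet_tree_for k T \<Gamma> \<and> psi_tree \<psi> \<Gamma> = psi_of k \<psi> CA T"
  unfolding psi_of_def by simp (rule LeastI_ex, blast)
lemma psiI: "psi_of k \<psi> CI T = \<psi> (attrs T)"
  unfolding psi_of_def by simp

lemma full_tree:
  assumes v: "valid_table k T" and k: "0 < k" and fs: "set fs = set (attrs T)"
  shows "det_tree_for k T [full k fs (lab T)]" and "psi_tree \<psi> [full k fs (lab T)] = \<psi> fs"
proof -
  have cp: "cpath [full k fs (lab T)] p d \<longleftrightarrow> map fst p = fs \<and> (\<forall>x\<in>set p. snd x < k) \<and> d = lab T p" for p d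
    unfolding cpath_def by (simp add: path_full)
  have nd: "nondet_tree_for k T [full k fs (lab T)]"
  proof (rule nondet_intro[OF v])
    show "\<forall>t\<in>set [full k fs (lab T)]. wf_node k t" using wf_full[OF k] by simp
    show "\<forall>t\<in>set [full k fs (lab T)]. \<forall>f. has_attr t f \<longrightarrow> f \<in> set (attrs T)"
      using attr_full[of k fs "lab T"] fs by auto
    show "\<forall>r\<in>tuples T. \<exists>p d. cpath [full k fs (lab T)] p d \<and> r \<in> subtuples T p"
    proof
      fix r assume r: "r \<in> tuples T"
      let ?p = "map (\<lambda>f. (f, vof T r f)) fs"
      have "cpath [full k fs (lab T)] ?p (lab T ?p)"
        unfolding cp using vof_lt[OF v r] fs by (auto simp: comp_def)
      moreover have "r \<in> subtuples T ?p" using r by (auto simp: subtuples_iff[OF v])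
      ultimately show "\<exists>p d. cpath [full k fs (lab T)] p d \<and> r \<in> subtuples T p" by blast
    qed
    show "\<forall>p d. cpath [full k fs (lab T)] p d \<longrightarrow> good T p \<and> d = lab T p"
    proof (intro allI impI conjI)
      fix p d assume a: "cpath [full k fs (lab T)] p d"
      thus "d = lab T p" using cp by blast
      have mp: "map fst p = fs" using a cp by blast
      show "good T p" unfolding good_def
      proof (intro ballI)
        fix r r' assume r: "r \<in> subtuples T p" and r': "r' \<in> subtuples T p"
        have rt: "r \<in> tuples T" "r' \<in> tuples T" using r r' subtuples_sub by auto
        show "r = r'"
        proof (rule tuple_eq[OF v rt])
          show "\<forall>f\<in>set (attrs T). vof T r f = vof T r' f"
          proof
            fix f assume f: "f \<in> set (attrs T)"
            hence "f \<in> set (map fst p)" using mp fs by simp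
            then obtain \<delta> where "(f,\<delta>) \<in> set p" by auto
            thus "vof T r f = vof T r' f" using r r' f by (auto simp: subtuples_iff[OF v])
          qed
        qed
      qed
    qed
  qed simp
  thus "det_tree_for k T [full k fs (lab T)]"
    unfolding det_tree_for_def is_deterministic_def using det_full by simp
  obtain p0 d0 where "path (full k fs (lab T)) p0 d0" using wf_path_ex[OF wf_full[OF k]] by blast
  hence c0: "cpath [full k fs (lab T)] p0 d0" unfolding cpath_def by simp
  have "psi_tree \<psi> [full k fs (lab T)] \<le> \<psi> fs"
    by (rule psi_tree_le[OF c0]) (simp add: cp)
  moreover have "\<psi> fs \<le> psi_tree \<psi> [full k fs (lab T)]"
    using psi_tree_ge[OF c0, of \<psi>] c0 cp by simp
  ultimately show "psi_tree \<psi> [full k fs (lab T)] = \<psi> fs" by simp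
qed

lemma det_ex: "valid_table k T \<Longrightarrow> 0 < k \<Longrightarrow> \<exists>\<Gamma>. det_tree_for k T \<Gamma>"
  using full_tree(1)[of k T "attrs T"] by blast

lemma D_le_fs: "valid_table k T \<Longrightarrow> 0 < k \<Longrightarrow> set fs = set (attrs T) \<Longrightarrow> psi_of k \<psi> CD T \<le> \<psi> fs"
  using full_tree[of k T fs] psiD_le by metis

lemma D_le_I: "valid_table k T \<Longrightarrow> 0 < k \<Longrightarrow> psi_of k \<psi> CD T \<le> psi_of k \<psi> CI T"
  using D_le_fs[of k T "attrs T"] by (simp add: psiI)

lemma A_le_D: assumes "valid_table k T" "0 < k" shows "psi_of k \<psi> CA T \<le> psi_of k \<psi> CD T"
proof -
  obtain \<Gamma>0 where "det_tree_for k T \<Gamma>0" using det_ex assms by blast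
  then obtain \<Gamma> where "det_tree_for k T \<Gamma>" "psi_tree \<psi> \<Gamma> = psi_of k \<psi> CD T" using psiD_att by blast
  thus ?thesis using psiA_le unfolding det_tree_for_def by metis
qed

definition common :: "'f dtable \<Rightarrow> bool" where
  "common T \<longleftrightarrow> (\<exists>d. \<forall>(r,D)\<in>set (rows T). d \<in> D)"

lemma common_tree: assumes v: "valid_table k T" and c: "common T"
  shows "psi_of k \<psi> CD T \<le> \<psi> []" "psi_of k \<psi> CA T \<le> \<psi> []"
proof -
  obtain d where d: "\<forall>(r,D)\<in>set (rows T). d \<in> D" using c unfolding common_def by blast
  have cp: "cpath [Term d] p d' \<longleftrightarrow> p = [] \<and> d' = d" for p d'
    unfolding cpath_def by (simp add: path_Term)
  have st: "subtuples T [] = tuples T" unfolding subtuples_def by simp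
  have nd: "nondet_tree_for k T [Term d]"
    unfolding nondet_tree_for_def is_dtree_def cp using d st
    by (auto simp: wf_Term has_attr_Term)
  have dt: "det_tree_for k T [Term d]"
    unfolding det_tree_for_def is_deterministic_def using nd det_Term by simp
  have "psi_tree \<psi> [Term d] = \<psi> []" unfolding psi_tree_def cp by simp
  thus "psi_of k \<psi> CD T \<le> \<psi> []" "psi_of k \<psi> CA T \<le> \<psi> []"
    using psiD_le[OF dt, of \<psi>] psiA_le[OF nd, of \<psi>] by auto
qed

lemma nondet_cov: assumes G: "nondet_tree_for k T \<Gamma>" and r: "r \<in> tuples T"
  shows "\<exists>p d. cpath \<Gamma> p d \<and> r \<in> subtuples T p"
proof -
  have "r \<in> \<Union> {subtuples T p | p d. cpath \<Gamma> p d}" using G r unfolding nondet_tree_for_def by simp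
  then obtain X where "X \<in> {subtuples T p | p d. cpath \<Gamma> p d}" "r \<in> X" by (rule UnionE)
  thus ?thesis by blast
qed

lemma nondet_corr: assumes G: "nondet_tree_for k T \<Gamma>" and "(r,D) \<in> set (rows T)" "cpath \<Gamma> p d" "r \<in> subtuples T p"
  shows "d \<in> D"
proof -
  have "\<forall>(r, D)\<in>set (rows T). \<forall>p d. cpath \<Gamma> p d \<and> r \<in> subtuples T p \<longrightarrow> d \<in> D"
    using G unfolding nondet_tree_for_def by (elim conjE)
  thus ?thesis using assms(2-4) by blast
qed

lemma not_common_rows: "\<not> common T \<Longrightarrow> \<exists>r D. (r,D) \<in> set (rows T)"
  unfolding common_def by (cases "rows T") (auto simp: case_prod_beta)

lemma A_lower: assumes v: "valid_table k T" and k: "0 < k" and nc: "\<not> common T"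
  and m: "\<And>w. w \<noteq> [] \<Longrightarrow> set w \<subseteq> set (attrs T) \<Longrightarrow> m \<le> \<psi> w"
  shows "m \<le> psi_of k \<psi> CA T"
proof -
  obtain \<Gamma>0 where "det_tree_for k T \<Gamma>0" using det_ex v k by blast
  hence "nondet_tree_for k T \<Gamma>0" unfolding det_tree_for_def by simp
  then obtain \<Gamma> where G: "nondet_tree_for k T \<Gamma>" and eq: "psi_tree \<psi> \<Gamma> = psi_of k \<psi> CA T"
    using psiA_att by blast
  obtain r D where rD: "(r,D) \<in> set (rows T)" using not_common_rows[OF nc] by blast
  hence "r \<in> tuples T" unfolding tuples_def by force
  then obtain p d where pd: "cpath \<Gamma> p d" "r \<in> subtuples T p"
    using nondet_cov[OF G] by blast
  have pne: "p \<noteq> []"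
  proof
    assume "p = []"
    have "\<forall>(r,D)\<in>set (rows T). d \<in> D"
    proof (clarify)
      fix r' D' assume a: "(r',D') \<in> set (rows T)"
      hence "r' \<in> tuples T" unfolding tuples_def by force
      hence "r' \<in> subtuples T p" using \<open>p = []\<close> unfolding subtuples_def by simp
      thus "d \<in> D'" using nondet_corr[OF G a pd(1)] by blast
    qed
    thus False using nc unfolding common_def by blast
  qed
  obtain t where t: "t \<in> set \<Gamma>" "path t p d" using pd unfolding cpath_def by blast
  have "set (map fst p) \<subseteq> set (attrs T)"
  proof
    fix f assume "f \<in> set (map fst p)"
    then obtain x where "x \<in> set p" "f = fst x" by auto
    hence "has_attr t f" using path_attr t by blast
    moreover have "\<forall>t\<in>set \<Gamma>. \<forall>f. has_attr t f \<longrightarrow> f \<in> set (attrs T)"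
      using G unfolding nondet_tree_for_def by (elim conjE)
    ultimately show "f \<in> set (attrs T)" using t by blast
  qed
  hence "m \<le> \<psi> (map fst p)" using m pne by simp
  also have "\<dots> \<le> psi_tree \<psi> \<Gamma>" by (rule psi_tree_ge[OF pd(1)])
  finally show ?thesis using eq by simp
qed

lemma sep_path: assumes v: "valid_table k T" and G: "nondet_tree_for k T \<Gamma>"
  and r1: "(r1,D1) \<in> set (rows T)" and r2: "(r2,D2) \<in> set (rows T)" and dj: "D1 \<inter> D2 = {}"
  and ag: "\<forall>f\<in>set (attrs T). f \<noteq> g \<longrightarrow> vof T r1 f = vof T r2 f"
  shows "\<exists>p d. cpath \<Gamma> p d \<and> r1 \<in> subtuples T p \<and> g \<in> set (map fst p)"
proof -
  have "r1 \<in> tuples T" "r2 \<in> tuples T" using r1 r2 unfolding tuples_def by force+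
  then obtain p d where pd: "cpath \<Gamma> p d" "r1 \<in> subtuples T p"
    using nondet_cov[OF G] by blast
  have "g \<in> set (map fst p)"
  proof (rule ccontr)
    assume ng: "g \<notin> set (map fst p)"
    have "r2 \<in> subtuples T p"
      unfolding subtuples_iff[OF v]
    proof (intro conjI ballI)
      show "r2 \<in> tuples T" by fact
      fix x assume x: "x \<in> set p"
      obtain f \<delta> where fd: "x = (f,\<delta>)" by (cases x)
      have "f \<noteq> g" using ng x fd by force
      thus "case x of (f, \<delta>) \<Rightarrow> f \<in> set (attrs T) \<longrightarrow> vof T r2 f = \<delta>"
        using pd(2) x fd ag unfolding subtuples_iff[OF v] by fastforce
    qed
    hence "d \<in> D1" "d \<in> D2" using nondet_corr[OF G] pd r1 r2 by blast+
    thus False using dj by blast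
  qed
  thus ?thesis using pd by blast
qed


definition badsucc :: "nat \<Rightarrow> nat" where
  "badsucc x = 3*(x div 3) + (x mod 3 + 2) mod 3"

definition lev :: "nat list \<Rightarrow> nat" where
  "lev w = (if w = [] then 0 else if 3 \<le> card (set w) then 4
            else if badsucc (hd w) \<in> set w then 3 else if card (set w) = 2 then 2 else 1)"

definition psiF :: "(nat \<Rightarrow> nat \<Rightarrow> nat) \<Rightarrow> nat list \<Rightarrow> nat" where
  "psiF F w = (if w = [] then 0 else F (hd w div 3) (lev w))"

lemma bs0: "badsucc (3*p) = 3*p+2" unfolding badsucc_def by presburger
lemma bs1: "badsucc (3*p+1) = 3*p" unfolding badsucc_def by presburger
lemma bs2: "badsucc (3*p+2) = 3*p+1" unfolding badsucc_def by presburger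
lemma md3[simp]: "Suc (3*p) mod 3 = 1" "Suc (Suc (3*p)) mod 3 = 2" "Suc (3*p) div 3 = p" "Suc (Suc (3*p)) div 3 = p"
  by presburger+

lemma lev_pos: "w \<noteq> [] \<Longrightarrow> lev w \<in> {1,2,3,4}"
  unfolding lev_def by auto

lemma trip_div: "x \<in> trip p \<Longrightarrow> x div 3 = p"
  unfolding trip_def by auto

lemma psiF_trip: "w \<noteq> [] \<Longrightarrow> set w \<subseteq> trip p \<Longrightarrow> psiF F w = F p (lev w)"
  unfolding psiF_def using trip_div[of "hd w" p] by (cases w) auto

lemma CC_valid: "T \<in> CC \<Longrightarrow> valid_table 3 T" unfolding CC_def by simp

definition pof :: "nat dtable \<Rightarrow> nat" where "pof T = hd (attrs T) div 3"

lemma CC_trip: assumes "T \<in> CC" shows "set (attrs T) \<subseteq> trip (pof T)"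
proof -
  obtain p where p: "set (attrs T) \<subseteq> trip p" using assms unfolding CC_def by blast
  have ne: "attrs T \<noteq> []" using assms unfolding CC_def valid_table_def by simp
  hence "hd (attrs T) \<in> trip p" using p by auto
  hence "pof T = p" unfolding pof_def using trip_div by simp
  thus ?thesis using p by simp
qed

lemma CC_ne: "T \<in> CC \<Longrightarrow> attrs T \<noteq> []" unfolding CC_def valid_table_def by simp

lemma CC_pat: assumes T: "T \<in> CC" and r: "r \<in> tuples T"
  shows "\<exists>s\<in>Rpat. \<forall>f\<in>set (attrs T). vof T r f = s ! (f mod 3)"
proof -
  obtain s where s: "s \<in> Rpat" "\<forall>i<length (attrs T). r!i = s!(attrs T!i mod 3)"
    using T r unfolding CC_def patok_def by blast
  have "\<forall>f\<in>set (attrs T). vof T r f = s ! (f mod 3)"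
  proof
    fix f assume "f \<in> set (attrs T)"
    then obtain i where i: "i < length (attrs T)" "attrs T ! i = f" by (auto simp: in_set_conv_nth)
    thus "vof T r f = s ! (f mod 3)" using vof[OF CC_valid[OF T] r i] s by simp
  qed
  thus ?thesis using s by blast
qed

definition sv :: "nat dtable \<Rightarrow> nat \<Rightarrow> nat list \<Rightarrow> nat list" where
  "sv T p r = [vof T r (3*p), vof T r (3*p+1), vof T r (3*p+2)]"

lemma trip_eq: "trip p = {3*p, 3*p+1, 3*p+2}" by (simp add: trip_def)

lemma sv_Rpat: assumes T: "T \<in> CC" and t3: "set (attrs T) = trip p" and r: "r \<in> tuples T"
  shows "sv T p r \<in> Rpat" and "\<And>j. j < 3 \<Longrightarrow> vof T r (3*p+j) = sv T p r ! j"
proof -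
  obtain s where s: "s\<in>Rpat" "\<forall>f\<in>set (attrs T). vof T r f = s ! (f mod 3)" using CC_pat[OF T r] by blast
  have l: "length s = 3" using s(1) unfolding Rpat_def by auto
  have "sv T p r = s" unfolding sv_def using s(2) t3 l
    by (auto simp: trip_def intro!: nth_equalityI simp: less_Suc_eq nth_Cons' numeral_2_eq_2)
  thus "sv T p r \<in> Rpat" using s by simp
  fix j :: nat assume "j < 3"
  hence "j = 0 \<or> j = 1 \<or> j = 2" by arith
  thus "vof T r (3*p+j) = sv T p r ! j" unfolding sv_def by auto
qed

lemma sv_eq: assumes T: "T \<in> CC" and t3: "set (attrs T) = trip p" and r: "r \<in> tuples T" and r': "r' \<in> tuples T"
  and e: "sv T p r = sv T p r'" shows "r = r'"
proof (rule tuple_eq[OF CC_valid[OF T] r r'])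
  show "\<forall>f\<in>set (attrs T). vof T r f = vof T r' f"
  proof
    fix f assume "f \<in> set (attrs T)"
    hence "f \<in> trip p" using t3 by simp
    then obtain j where o: "j < 3" "f = 3*p+j" unfolding trip_def by auto
    show "vof T r f = vof T r' f" using sv_Rpat(2)[OF T t3 r o(1)] sv_Rpat(2)[OF T t3 r' o(1)] e o by simp
  qed
qed


lemma bsS[simp]: "badsucc (3*p) = Suc (Suc (3*p))" "badsucc (Suc (3*p)) = 3*p" "badsucc (Suc (Suc (3*p))) = Suc (3*p)"
  using bs0[of p] bs1[of p] bs2[of p] by simp_all

lemma lev_words[simp]:
  "lev [3*p] = 1" "lev [Suc (3*p)] = 1" "lev [Suc (Suc (3*p))] = 1"
  "lev [3*p, Suc (3*p)] = 2" "lev [Suc (3*p), Suc (Suc (3*p))] = 2" "lev [Suc (Suc (3*p)), 3*p] = 2"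
  "lev [3*p, Suc (Suc (3*p))] = 3"
  "lev [3*p, Suc (3*p), Suc (Suc (3*p))] = 4"
  unfolding lev_def by auto

lemma lev12: "w \<noteq> [] \<Longrightarrow> card (set w) < 3 \<Longrightarrow> badsucc (hd w) \<notin> set w \<Longrightarrow> lev w = 1 \<or> lev w = 2"
  unfolding lev_def by auto

lemma card_trip: "card (trip p) = 3" unfolding trip_def by simp

lemma small_fs: assumes S: "S \<subseteq> trip p" "S \<noteq> {}" "S \<noteq> trip p"
  shows "\<exists>fs. set fs = S \<and> fs \<noteq> [] \<and> (lev fs = 1 \<or> lev fs = 2)"
proof -
  let ?a = "3*p" and ?b = "Suc (3*p)" and ?c = "Suc (Suc (3*p))"
  have tr: "trip p = {?a, ?b, ?c}" by (simp add: trip_def)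
  have "S \<subset> trip p" using S by blast
  moreover have "finite (trip p)" by (simp add: trip_def)
  ultimately have cS: "card S < 3" using psubset_card_mono[of "trip p" S] card_trip[of p] by simp
  show ?thesis
  proof (cases "?a \<in> S \<and> ?c \<in> S")
    case True
    have "?b \<notin> S"
    proof
      assume "?b \<in> S" hence "trip p \<subseteq> S" using True tr by auto
      thus False using S by blast
    qed
    hence "set [?c, ?a] = S" using True S(1) tr by auto
    moreover have "badsucc (hd [?c, ?a]) \<notin> set [?c, ?a]" by simp
    ultimately show ?thesis using lev12[of "[?c, ?a]"] cS by blast
  next
    case False
    define fs where "fs = filter (\<lambda>x. x \<in> S) [?a, ?b, ?c]"
    have sf: "set fs = S" unfolding fs_def using S(1) tr by auto
    hence ne: "fs \<noteq> []" using S(2) by auto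
    have "badsucc (hd fs) \<notin> set fs"
    proof (cases "?a \<in> S")
      case True thus ?thesis using False unfolding fs_def by simp
    next
      case na: False
      show ?thesis
      proof (cases "?b \<in> S")
        case True thus ?thesis using na unfolding fs_def by simp
      next
        case False thus ?thesis using na ne unfolding fs_def by auto
      qed
    qed
    thus ?thesis using lev12[OF ne] sf cS ne by auto
  qed
qed

lemma Dbound2: assumes T: "T \<in> CC" and p: "set (attrs T) \<subseteq> trip p" and n3: "set (attrs T) \<noteq> trip p"
  shows "psi_of 3 (psiF F) CD T \<le> max (F p 1) (F p 2)"
proof -
  obtain fs where fs: "set fs = set (attrs T)" "fs \<noteq> []" "lev fs = 1 \<or> lev fs = 2"
    using small_fs[OF p _ n3] CC_ne[OF T] by auto
  have "psi_of 3 (psiF F) CD T \<le> psiF F fs" using D_le_fs[OF CC_valid[OF T] _ fs(1)] by simp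
  also have "\<dots> = F p (lev fs)" using psiF_trip[OF fs(2)] fs(1) p by simp
  also have "\<dots> \<le> max (F p 1) (F p 2)" using fs(3) by auto
  finally show ?thesis .
qed

definition adt :: "nat dtable \<Rightarrow> nat \<Rightarrow> nat dnode" where
  "adt T p = Work (3*p) (map (\<lambda>u. (u, full 3 (if u = 0 then [3*p+2] else [3*p+1]) (\<lambda>q. lab T ((3*p,u)#q)))) [0..<3])"

lemma adt_mem: "(\<delta>,t) \<in> set (map (\<lambda>u. (u, full 3 (if u = 0 then [3*p+2] else [3*p+1]) (\<lambda>q. lab T ((3*p,u)#q)))) [0..<3])
   \<longleftrightarrow> \<delta> < 3 \<and> t = full 3 (if \<delta> = 0 then [3*p+2] else [3*p+1]) (\<lambda>q. lab T ((3*p,\<delta>)#q))"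
  by (simp add: image_iff)

lemma path_adt: "path (adt T p) q d \<longleftrightarrow> (\<exists>u<3. \<exists>q'. q = (3*p,u)#q' \<and> map fst q' = (if u=0 then [3*p+2] else [3*p+1])
   \<and> (\<forall>x\<in>set q'. snd x < 3) \<and> d = lab T ((3*p,u)#q'))"
  unfolding adt_def path_Work adt_mem by (simp add: path_full)

lemma pat_adt: "s \<in> Rpat \<Longrightarrow> s' \<in> Rpat \<Longrightarrow> s!0 = s'!0 \<Longrightarrow> (if s!0 = 0 then s!2 = s'!2 else s!1 = s'!1) \<Longrightarrow> s = s'"
  unfolding Rpat_def by auto

lemma Dbound3: assumes T: "T \<in> CC" and t3: "set (attrs T) = trip p"
  shows "psi_of 3 (psiF F) CD T \<le> max (F p 2) (F p 3)"
proof -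
  have v: "valid_table 3 T" using CC_valid[OF T] .
  have cp: "cpath [adt T p] q d \<longleftrightarrow> path (adt T p) q d" for q d unfolding cpath_def by simp
  have inA: "3*p \<in> set (attrs T)" "3*p+1 \<in> set (attrs T)" "3*p+2 \<in> set (attrs T)" using t3 by (auto simp: trip_def)
  have nd: "nondet_tree_for 3 T [adt T p]"
  proof (rule nondet_intro[OF v])
    show "\<forall>t\<in>set [adt T p]. wf_node 3 t" by (simp add: adt_def wf_Work wf_Term)
    show "\<forall>t\<in>set [adt T p]. \<forall>f. has_attr t f \<longrightarrow> f \<in> set (attrs T)"
      using inA by (auto simp: adt_def has_attr_Work has_attr_Term split: if_splits)
    show "\<forall>r\<in>tuples T. \<exists>q d. cpath [adt T p] q d \<and> r \<in> subtuples T q"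
    proof
      fix r assume r: "r \<in> tuples T"
      define u where "u = vof T r (3*p)"
      define g where "g = (if u = 0 then 3*p+2 else 3*p+1)"
      let ?q = "[(3*p,u), (g, vof T r g)]"
      have g: "g \<in> set (attrs T)" using inA unfolding g_def by auto
      have "path (adt T p) ?q (lab T ?q)" unfolding path_adt
        using vof_lt[OF v r inA(1)] vof_lt[OF v r g] unfolding u_def g_def by auto
      moreover have "r \<in> subtuples T ?q" using r unfolding subtuples_iff[OF v] u_def by auto
      ultimately show "\<exists>q d. cpath [adt T p] q d \<and> r \<in> subtuples T q" using cp by blast
    qed
    show "\<forall>q d. cpath [adt T p] q d \<longrightarrow> good T q \<and> d = lab T q"
    proof (intro allI impI)
      fix q d assume "cpath [adt T p] q d"
      then obtain u q' where u: "u < 3" "q = (3*p,u)#q'" "map fst q' = (if u=0 then [3*p+2] else [3*p+1])" "d = lab T ((3*p,u)#q')"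
        unfolding cp path_adt by blast
      obtain v' where q': "q' = [(if u=0 then 3*p+2 else 3*p+1, v')]" using u(3) by (cases q') (auto split: if_splits)
      have "good T q" unfolding good_def
      proof (intro ballI)
        fix r1 r2 assume r1: "r1 \<in> subtuples T q" and r2: "r2 \<in> subtuples T q"
        have rt: "r1 \<in> tuples T" "r2 \<in> tuples T" using r1 r2 subtuples_sub by auto
        have e1: "vof T r1 (3*p) = u" "vof T r2 (3*p) = u" using r1 r2 inA u(2) by (auto simp: subtuples_iff[OF v])
        have e2: "vof T r1 (if u=0 then 3*p+2 else 3*p+1) = v'" "vof T r2 (if u=0 then 3*p+2 else 3*p+1) = v'"
          using r1 r2 inA u(2) q' by (auto simp: subtuples_iff[OF v] split: if_splits)
        have s1: "sv T p r1 ! 0 = u" "sv T p r2 ! 0 = u" using e1 sv_Rpat(2)[OF T t3 rt(1), of 0] sv_Rpat(2)[OF T t3 rt(2), of 0] by simp_all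
        have s2: "if sv T p r1 ! 0 = 0 then sv T p r1 ! 2 = sv T p r2 ! 2 else sv T p r1 ! 1 = sv T p r2 ! 1"
          using e2 s1 sv_Rpat(2)[OF T t3 rt(1), of 1] sv_Rpat(2)[OF T t3 rt(2), of 1]
            sv_Rpat(2)[OF T t3 rt(1), of 2] sv_Rpat(2)[OF T t3 rt(2), of 2] by (auto split: if_splits)
        have "sv T p r1 = sv T p r2"
          by (rule pat_adt[OF sv_Rpat(1)[OF T t3 rt(1)] sv_Rpat(1)[OF T t3 rt(2)]]) (use s1 s2 in auto)
        thus "r1 = r2" by (rule sv_eq[OF T t3 rt])
      qed
      thus "good T q \<and> d = lab T q" using u(2,4) by simp
    qed
  qed simp
  have dt: "det_tree_for 3 T [adt T p]"
    unfolding det_tree_for_def is_deterministic_def using nd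
    by (auto simp: adt_def det_Work det_Term comp_def)
  have "wf_node 3 (adt T p)" by (simp add: adt_def wf_Work wf_Term)
  then obtain q0 d0 where "path (adt T p) q0 d0" using wf_path_ex by blast
  hence c0: "cpath [adt T p] q0 d0" using cp by simp
  have "psi_tree (psiF F) [adt T p] \<le> max (F p 2) (F p 3)"
  proof (rule psi_tree_le[OF c0])
    fix q d assume "cpath [adt T p] q d"
    then obtain u q' where u: "u < 3" "q = (3*p,u)#q'" "map fst q' = (if u=0 then [3*p+2] else [3*p+1])"
      unfolding cp path_adt by blast
    hence "map fst q = (if u = 0 then [3*p, 3*p+2] else [3*p, 3*p+1])" by simp
    thus "psiF F (map fst q) \<le> max (F p 2) (F p 3)" by (simp add: psiF_def)
  qed
  thus ?thesis using psiD_le[OF dt, of "psiF F"] by simp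
qed


definition certoff :: "nat list \<Rightarrow> nat list" where
  "certoff s = (if s = [0,0,0] then [2] else if s = [0,0,1] then [2,0] else if s = [1,1,1] then [0,1]
     else if s = [2,1,1] then [0] else if s = [1,0,2] then [1,2] else [1])"

lemma pat_cert: "s \<in> Rpat \<Longrightarrow> s' \<in> Rpat \<Longrightarrow> \<forall>j\<in>set (certoff s). s'!j = s!j \<Longrightarrow> s' = s"
  unfolding Rpat_def certoff_def by auto

lemma certoff_props: "s \<in> Rpat \<Longrightarrow> certoff s \<noteq> [] \<and> set (certoff s) \<subseteq> {0,1,2}
   \<and> (lev (map (\<lambda>j. 3*p+j) (certoff s)) = 1 \<or> lev (map (\<lambda>j. 3*p+j) (certoff s)) = 2)"
  unfolding Rpat_def certoff_def by auto

definition cw :: "nat dtable \<Rightarrow> nat \<Rightarrow> nat list \<Rightarrow> (nat \<times> nat) list" where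
  "cw T p r = map (\<lambda>j. (3*p+j, sv T p r ! j)) (certoff (sv T p r))"

definition cert :: "nat dtable \<Rightarrow> nat \<Rightarrow> nat dnode list" where
  "cert T p = map (\<lambda>x. chain (cw T p (fst x)) (lab T (cw T p (fst x)))) (rows T)"

lemma Abound3: assumes T: "T \<in> CC" and t3: "set (attrs T) = trip p" and nc: "\<not> common T"
  shows "psi_of 3 (psiF F) CA T \<le> max (F p 1) (F p 2)"
proof -
  have v: "valid_table 3 T" using CC_valid[OF T] .
  have inA: "j < 3 \<Longrightarrow> 3*p+j \<in> set (attrs T)" for j using t3 by (auto simp: trip_def less_Suc_eq numeral_3_eq_3)
  have cpc: "cpath (cert T p) q d \<longleftrightarrow> (\<exists>r\<in>tuples T. q = cw T p r \<and> d = lab T (cw T p r))" for q d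
    unfolding cpath_def cert_def tuples_def by (auto simp: path_chain)
  have cwp: "r \<in> tuples T \<Longrightarrow> certoff (sv T p r) \<noteq> [] \<and> set (certoff (sv T p r)) \<subseteq> {0,1,2}
   \<and> (lev (map (\<lambda>j. 3*p+j) (certoff (sv T p r))) = 1 \<or> lev (map (\<lambda>j. 3*p+j) (certoff (sv T p r))) = 2)" for r
    using certoff_props[OF sv_Rpat(1)[OF T t3]] by blast
  obtain r0 D0 where r0: "(r0,D0) \<in> set (rows T)" using not_common_rows[OF nc] by blast
  have nd: "nondet_tree_for 3 T (cert T p)"
  proof (rule nondet_intro[OF v])
    show "cert T p \<noteq> []" using r0 unfolding cert_def by auto
    show "\<forall>t\<in>set (cert T p). wf_node 3 t"
    proof
      fix t assume "t \<in> set (cert T p)"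
      then obtain x where x: "x \<in> set (rows T)" "t = chain (cw T p (fst x)) (lab T (cw T p (fst x)))"
        unfolding cert_def by auto
      have r: "fst x \<in> tuples T" using x unfolding tuples_def by auto
      have "\<forall>y\<in>set (cw T p (fst x)). snd y < 3"
      proof
        fix y assume "y \<in> set (cw T p (fst x))"
        then obtain j where j: "j \<in> set (certoff (sv T p (fst x)))" "y = (3*p+j, sv T p (fst x) ! j)"
          unfolding cw_def by auto
        have j3: "j < 3" using j cwp[OF r] by auto
        thus "snd y < 3" using j sv_Rpat(2)[OF T t3 r j3] vof_lt[OF v r inA[OF j3]] by simp
      qed
      thus "wf_node 3 t" using x wf_chain by blast
    qed
    show "\<forall>t\<in>set (cert T p). \<forall>f. has_attr t f \<longrightarrow> f \<in> set (attrs T)"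
    proof (intro ballI allI impI)
      fix t f assume t: "t \<in> set (cert T p)" and h: "has_attr t f"
      then obtain x where x: "x \<in> set (rows T)" "t = chain (cw T p (fst x)) (lab T (cw T p (fst x)))"
        unfolding cert_def by auto
      have r: "fst x \<in> tuples T" using x unfolding tuples_def by auto
      have "f \<in> fst ` set (cw T p (fst x))" using attr_chain[of "cw T p (fst x)" "lab T (cw T p (fst x))" f] h x by simp
      then obtain j where j: "j \<in> set (certoff (sv T p (fst x)))" "f = 3*p+j" unfolding cw_def by auto
      have j3: "j < 3" using j cwp[OF r] by auto
      thus "f \<in> set (attrs T)" using inA[OF j3] j by simp
    qed
    show "\<forall>r\<in>tuples T. \<exists>q d. cpath (cert T p) q d \<and> r \<in> subtuples T q"
    proof
      fix r assume r: "r \<in> tuples T"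
      have "cpath (cert T p) (cw T p r) (lab T (cw T p r))" using cpc r by blast
      moreover have "r \<in> subtuples T (cw T p r)"
        unfolding subtuples_iff[OF v]
      proof (intro conjI ballI)
        show "r \<in> tuples T" by fact
        fix y assume "y \<in> set (cw T p r)"
        then obtain j where j: "j \<in> set (certoff (sv T p r))" "y = (3*p+j, sv T p r ! j)"
          unfolding cw_def by auto
        have j3: "j < 3" using j cwp[OF r] by auto
        show "case y of (f, \<delta>) \<Rightarrow> f \<in> set (attrs T) \<longrightarrow> vof T r f = \<delta>"
          using j sv_Rpat(2)[OF T t3 r j3] by simp
      qed
      ultimately show "\<exists>q d. cpath (cert T p) q d \<and> r \<in> subtuples T q" by blast
    qed
    show "\<forall>q d. cpath (cert T p) q d \<longrightarrow> good T q \<and> d = lab T q"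
    proof (intro allI impI)
      fix q d assume "cpath (cert T p) q d"
      then obtain r where r: "r \<in> tuples T" "q = cw T p r" "d = lab T (cw T p r)" using cpc by blast
      have "good T q" unfolding good_def
      proof (intro ballI)
        fix r1 r2 assume r1: "r1 \<in> subtuples T q" and r2: "r2 \<in> subtuples T q"
        have rt: "r1 \<in> tuples T" "r2 \<in> tuples T" using r1 r2 subtuples_sub by auto
        have "sv T p ri = sv T p r" if ri: "ri \<in> subtuples T q" "ri \<in> tuples T" for ri
        proof (rule pat_cert[OF sv_Rpat(1)[OF T t3 r(1)] sv_Rpat(1)[OF T t3 ri(2)]])
          show "\<forall>j\<in>set (certoff (sv T p r)). sv T p ri ! j = sv T p r ! j"
          proof
            fix j assume j: "j \<in> set (certoff (sv T p r))"
            have j3: "j < 3" using j cwp[OF r(1)] by auto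
            have "(3*p+j, sv T p r ! j) \<in> set q" using j r(2) unfolding cw_def by auto
            moreover have "\<forall>(f, \<delta>)\<in>set q. f \<in> set (attrs T) \<longrightarrow> vof T ri f = \<delta>"
              using ri(1) unfolding subtuples_iff[OF v] by (rule conjunct2)
            ultimately have "3*p+j \<in> set (attrs T) \<longrightarrow> vof T ri (3*p+j) = sv T p r ! j" by fastforce
            hence "vof T ri (3*p+j) = sv T p r ! j" using inA[OF j3] by blast
            thus "sv T p ri ! j = sv T p r ! j" using sv_Rpat(2)[OF T t3 ri(2) j3] by simp
          qed
        qed
        hence "sv T p r1 = sv T p r2" using r1 r2 rt by simp
        thus "r1 = r2" by (rule sv_eq[OF T t3 rt])
      qed
      thus "good T q \<and> d = lab T q" using r by simp
    qed
  qed
  have c0: "cpath (cert T p) (cw T p r0) (lab T (cw T p r0))" using cpc r0 unfolding tuples_def by force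
  have "psi_tree (psiF F) (cert T p) \<le> max (F p 1) (F p 2)"
  proof (rule psi_tree_le[OF c0])
    fix q d assume "cpath (cert T p) q d"
    then obtain r where r: "r \<in> tuples T" "q = cw T p r" using cpc by blast
    have mf: "map fst q = map (\<lambda>j. 3*p+j) (certoff (sv T p r))" using r unfolding cw_def by simp
    have ne: "map fst q \<noteq> []" and st: "set (map fst q) \<subseteq> trip p"
      using cwp[OF r(1)] mf by (auto simp: trip_def)
    have "psiF F (map fst q) = F p (lev (map fst q))" using psiF_trip[OF ne st] .
    thus "psiF F (map fst q) \<le> max (F p 1) (F p 2)" using cwp[OF r(1)] mf by auto
  qed
  thus ?thesis using psiA_le[OF nd, of "psiF F"] by simp
qed


definition Et :: "nat \<Rightarrow> nat dtable" where
  "Et p = \<lparr>attrs = [3*p, 3*p+1, 3*p+2], rows = []\<rparr>"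
definition Ot :: "nat \<Rightarrow> nat dtable" where
  "Ot p = \<lparr>attrs = [3*p], rows = [([0],{0}), ([1],{1})]\<rparr>"
definition Rt :: "nat \<Rightarrow> nat dtable" where
  "Rt p = \<lparr>attrs = [3*p, 3*p+1, 3*p+2], rows = [([0,0,0],{0}),([0,0,1],{1}),([1,1,1],{2}),([2,1,1],{3}),([1,0,2],{4}),([1,2,2],{5})]\<rparr>"
definition Zt :: "nat \<Rightarrow> nat dtable" where
  "Zt m = \<lparr>attrs = replicate (Suc m) 0, rows = []\<rparr>"

lemma less3: "(i::nat) < 3 \<longleftrightarrow> i = 0 \<or> i = 1 \<or> i = 2" by arith

lemma valid_dist: "attrs T \<noteq> [] \<Longrightarrow> distinct (attrs T) \<Longrightarrow> distinct (map fst (rows T)) \<Longrightarrow>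
  \<forall>(r,D)\<in>set (rows T). length r = length (attrs T) \<and> (\<forall>x\<in>set r. x<k) \<and> finite D \<and> D \<noteq> {} \<Longrightarrow> valid_table k T"
  unfolding valid_table_def by (auto simp: nth_eq_iff_index_eq)

lemma Et_CC: "Et p \<in> CC"
proof -
  have v: "valid_table 3 (Et p)" by (rule valid_dist) (auto simp: Et_def)
  have t: "set (attrs (Et p)) \<subseteq> trip p" unfolding Et_def trip_def by auto
  have "patok (Et p)" unfolding patok_def Et_def tuples_def by simp
  thus ?thesis using v t unfolding CC_def by blast
qed

lemma Zt_CC: "Zt m \<in> CC"
  unfolding CC_def Zt_def valid_table_def patok_def tuples_def trip_def
  by auto

lemma Ot_CC: "Ot p \<in> CC"
proof -
  have v: "valid_table 3 (Ot p)" unfolding Ot_def valid_table_def by auto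
  have t: "set (attrs (Ot p)) \<subseteq> trip p" unfolding Ot_def trip_def by auto
  have "patok (Ot p)" unfolding patok_def Ot_def tuples_def Rpat_def by auto
  thus ?thesis using v t unfolding CC_def by blast
qed

lemma Rt_CC: "Rt p \<in> CC"
proof -
  have v: "valid_table 3 (Rt p)" by (rule valid_dist) (auto simp: Rt_def)
  have t: "set (attrs (Rt p)) \<subseteq> trip p" unfolding Rt_def trip_def by auto
  have am: "\<forall>i<length (attrs (Rt p)). attrs (Rt p) ! i mod 3 = i" by (auto simp: Rt_def less_Suc_eq)
  have "tuples (Rt p) \<subseteq> Rpat" by (auto simp: Rt_def tuples_def Rpat_def)
  hence "patok (Rt p)" unfolding patok_def using am by auto
  thus ?thesis using v t unfolding CC_def by blast
qed

lemma Et_common: "common (Et p)" unfolding common_def Et_def by simp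
lemma Zt_common: "common (Zt m)" unfolding common_def Zt_def by simp
lemma Ot_nc: "\<not> common (Ot p)" unfolding common_def Ot_def by auto
lemma Rt_nc: "\<not> common (Rt p)" unfolding common_def Rt_def by auto

lemma lev_ge3: "w \<noteq> [] \<Longrightarrow> badsucc (hd w) \<in> set w \<Longrightarrow> lev w = 3 \<or> lev w = 4"
  unfolding lev_def by auto

lemma lower_helper:
  assumes v: "valid_table k T" and G: "nondet_tree_for k T [Work f es]"
    and r1: "(r1,D1) \<in> set (rows T)" and r2: "(r2,D2) \<in> set (rows T)" and dj: "D1 \<inter> D2 = {}"
    and ag: "\<forall>h\<in>set (attrs T). h \<noteq> badsucc f \<longrightarrow> vof T r1 h = vof T r2 h"
  shows "\<exists>q d. cpath [Work f es] q d \<and> (lev (map fst q) = 3 \<or> lev (map fst q) = 4) \<and> map fst q \<noteq> []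
     \<and> set (map fst q) \<subseteq> set (attrs T)"
proof -
  obtain q d where q: "cpath [Work f es] q d" "badsucc f \<in> set (map fst q)"
    using sep_path[OF v G r1 r2 dj ag] by blast
  have pt: "path (Work f es) q d" using q(1) unfolding cpath_def by simp
  then obtain \<delta> q' where qq: "q = (f,\<delta>)#q'" unfolding path_Work by blast
  have A: "set (map fst q) \<subseteq> set (attrs T)"
  proof
    fix h assume "h \<in> set (map fst q)"
    then obtain x where "x \<in> set q" "h = fst x" by auto
    hence "has_attr (Work f es) h" using path_attr pt by blast
    moreover have "\<forall>t\<in>set [Work f es]. \<forall>f. has_attr t f \<longrightarrow> f \<in> set (attrs T)"
      using G unfolding nondet_tree_for_def by (elim conjE)
    ultimately show "h \<in> set (attrs T)" by simp
  qed
  have B: "lev (map fst q) = 3 \<or> lev (map fst q) = 4"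
    using lev_ge3[of "map fst q"] q(2) qq by simp
  have C: "map fst q \<noteq> []" using qq by simp
  show ?thesis using q(1) A B C by blast
qed

lemma vofR: assumes "r \<in> tuples (Rt p)"
  shows "vof (Rt p) r (3*p) = r!0" "vof (Rt p) r (Suc (3*p)) = r!1" "vof (Rt p) r (Suc (Suc (3*p))) = r!2"
proof -
  have v: "valid_table 3 (Rt p)" using Rt_CC CC_valid by blast
  show "vof (Rt p) r (3*p) = r!0" using vof[OF v assms, of 0] by (simp add: Rt_def)
  show "vof (Rt p) r (Suc (3*p)) = r!1" using vof[OF v assms, of 1] by (simp add: Rt_def)
  show "vof (Rt p) r (Suc (Suc (3*p))) = r!2" using vof[OF v assms, of 2] by (simp add: Rt_def)
qed

lemma Rt_lower: assumes mono: "F p 3 \<le> F p 4" and dt: "det_tree_for 3 (Rt p) \<Gamma>"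
  shows "F p 3 \<le> psi_tree (psiF F) \<Gamma>"
proof -
  have v: "valid_table 3 (Rt p)" using Rt_CC CC_valid by blast
  have G: "nondet_tree_for 3 (Rt p) \<Gamma>" using dt unfolding det_tree_for_def by simp
  obtain t where Gt: "\<Gamma> = [t]" using dt unfolding det_tree_for_def is_deterministic_def
    by (cases \<Gamma>) auto
  have tup: "r \<in> set (map fst (rows (Rt p))) \<Longrightarrow> r \<in> tuples (Rt p)" for r unfolding tuples_def by simp
  have at: "set (attrs (Rt p)) = {3*p, Suc (3*p), Suc (Suc (3*p))}" by (simp add: Rt_def)
  have x1: "([0,0,0],{0}) \<in> set (rows (Rt p))" and x2: "([0,0,1],{1}) \<in> set (rows (Rt p))"
    and y1: "([1,1,1],{2}) \<in> set (rows (Rt p))" and y2: "([2,1,1],{3}) \<in> set (rows (Rt p))"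
    and z1: "([1,0,2],{4}) \<in> set (rows (Rt p))" and z2: "([1,2,2],{5}) \<in> set (rows (Rt p))"
    by (simp_all add: Rt_def)
  have tx: "[0,0,0] \<in> tuples (Rt p)" "[0,0,1] \<in> tuples (Rt p)" "[1,1,1] \<in> tuples (Rt p)"
    "[2,1,1] \<in> tuples (Rt p)" "[1,0,2] \<in> tuples (Rt p)" "[1,2,2] \<in> tuples (Rt p)"
    by (simp_all add: tuples_def Rt_def)
  have key: "\<exists>q d. cpath \<Gamma> q d \<and> (lev (map fst q) = 3 \<or> lev (map fst q) = 4) \<and> map fst q \<noteq> []
     \<and> set (map fst q) \<subseteq> set (attrs (Rt p))"
  proof (cases t)
    case (Term d)
    have ag: "\<forall>h\<in>set (attrs (Rt p)). h \<noteq> Suc (Suc (3*p)) \<longrightarrow> vof (Rt p) [0,0,0] h = vof (Rt p) [0,0,1] h"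
      using vofR[OF tx(1)] vofR[OF tx(2)] at by simp
    obtain q d' where "cpath \<Gamma> q d'" "Suc (Suc (3*p)) \<in> set (map fst q)"
      using sep_path[OF v G x1 x2 _ ag] by auto
    moreover have "cpath \<Gamma> q d' \<Longrightarrow> q = []" using Gt Term unfolding cpath_def by (simp add: path_Term)
    ultimately show ?thesis by simp
  next
    case (Work f es)
    have G': "nondet_tree_for 3 (Rt p) [Work f es]" using G Gt Work by simp
    have "has_attr (Work f es) f" by (rule has_attr.intros)
    moreover have "\<forall>t\<in>set \<Gamma>. \<forall>f. has_attr t f \<longrightarrow> f \<in> set (attrs (Rt p))"
      using G unfolding nondet_tree_for_def by (elim conjE)
    ultimately have "f \<in> set (attrs (Rt p))" using Gt Work by simp
    hence "f = 3*p \<or> f = Suc (3*p) \<or> f = Suc (Suc (3*p))" using at by simp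
    thus ?thesis
    proof (elim disjE)
      assume f: "f = 3*p"
      have ag: "\<forall>h\<in>set (attrs (Rt p)). h \<noteq> badsucc f \<longrightarrow> vof (Rt p) [0,0,0] h = vof (Rt p) [0,0,1] h"
        using vofR[OF tx(1)] vofR[OF tx(2)] at f by simp
      show ?thesis using lower_helper[OF v G' x1 x2 _ ag] Gt Work by simp
    next
      assume f: "f = Suc (3*p)"
      have ag: "\<forall>h\<in>set (attrs (Rt p)). h \<noteq> badsucc f \<longrightarrow> vof (Rt p) [1,1,1] h = vof (Rt p) [2,1,1] h"
        using vofR[OF tx(3)] vofR[OF tx(4)] at f by simp
      show ?thesis using lower_helper[OF v G' y1 y2 _ ag] Gt Work by simp
    next
      assume f: "f = Suc (Suc (3*p))"
      have ag: "\<forall>h\<in>set (attrs (Rt p)). h \<noteq> badsucc f \<longrightarrow> vof (Rt p) [1,0,2] h = vof (Rt p) [1,2,2] h"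
        using vofR[OF tx(5)] vofR[OF tx(6)] at f by simp
      show ?thesis using lower_helper[OF v G' z1 z2 _ ag] Gt Work by simp
    qed
  qed
  then obtain q d where q: "cpath \<Gamma> q d" "lev (map fst q) = 3 \<or> lev (map fst q) = 4" "map fst q \<noteq> []"
    "set (map fst q) \<subseteq> set (attrs (Rt p))" by blast
  have "set (map fst q) \<subseteq> trip p" using q(4) at by (auto simp: trip_def)
  hence "psiF F (map fst q) = F p (lev (map fst q))" using psiF_trip[OF q(3)] by simp
  hence "F p 3 \<le> psiF F (map fst q)" using q(2) mono by auto
  also have "\<dots> \<le> psi_tree (psiF F) \<Gamma>" by (rule psi_tree_ge[OF q(1)])
  finally show ?thesis .
qed


abbreviation "II F T \<equiv> psi_of 3 (psiF F) CI T"
abbreviation "DD F T \<equiv> psi_of 3 (psiF F) CD T"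
abbreviation "AA F T \<equiv> psi_of 3 (psiF F) CA T"

lemma S1: assumes T: "T \<in> CC" shows "II F T = F (pof T) (lev (attrs T))" "lev (attrs T) \<in> {1,2,3,4}"
proof -
  show "II F T = F (pof T) (lev (attrs T))" using psiF_trip[OF CC_ne[OF T] CC_trip[OF T]] by (simp add: psiI)
  show "lev (attrs T) \<in> {1,2,3,4}" using lev_pos[OF CC_ne[OF T]] .
qed

lemma S2: assumes T: "T \<in> CC" and c: "common T" shows "DD F T = 0" "AA F T = 0"
  using common_tree[OF CC_valid[OF T] c, of "psiF F"] by (simp_all add: psiF_def)

lemma S3: assumes T: "T \<in> CC" and nc: "\<not> common T" and m: "\<forall>l\<in>{1,2,3,4}. m \<le> F (pof T) l"
  shows "m \<le> AA F T"
proof (rule A_lower[OF CC_valid[OF T] _ nc])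
  fix w :: "nat list" assume w: "w \<noteq> []" "set w \<subseteq> set (attrs T)"
  hence "set w \<subseteq> trip (pof T)" using CC_trip[OF T] by blast
  hence "psiF F w = F (pof T) (lev w)" using psiF_trip[OF w(1)] by simp
  thus "m \<le> psiF F w" using m lev_pos[OF w(1)] by auto
qed simp

lemma S4: assumes T: "T \<in> CC" shows "DD F T \<le> II F T" "AA F T \<le> DD F T"
  using D_le_I[OF CC_valid[OF T]] A_le_D[OF CC_valid[OF T]] by simp_all

lemma lev_trip: "set w = trip p \<Longrightarrow> lev w = 4"
  unfolding lev_def using card_trip[of p] by auto

lemma S5: assumes T: "T \<in> CC" and n: "set (attrs T) \<noteq> trip (pof T)"
  shows "DD F T \<le> max (F (pof T) 1) (F (pof T) 2)"
  using Dbound2[OF T CC_trip[OF T] n] .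

lemma S6: assumes T: "T \<in> CC" and n: "set (attrs T) = trip (pof T)"
  shows "DD F T \<le> max (F (pof T) 2) (F (pof T) 3)" "II F T = F (pof T) 4"
  using Dbound3[OF T n] S1(1)[OF T, of F] lev_trip[OF n] by simp_all

lemma S7: assumes T: "T \<in> CC" shows "AA F T \<le> max (F (pof T) 1) (F (pof T) 2)"
proof (cases "set (attrs T) = trip (pof T)")
  case True
  show ?thesis
  proof (cases "common T")
    case True thus ?thesis using S2[OF T] by simp
  next
    case False thus ?thesis using Abound3[OF T \<open>set (attrs T) = trip (pof T)\<close>] by simp
  qed
next
  case False thus ?thesis using S5[OF T False, of F] S4(2)[OF T, of F] by simp
qed

lemma pof_Et: "pof (Et p) = p" unfolding pof_def Et_def by simp
lemma pof_Rt: "pof (Rt p) = p" unfolding pof_def Rt_def by simp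
lemma pof_Ot: "pof (Ot p) = p" unfolding pof_def Ot_def by simp

lemma Et_vals: "II F (Et p) = F p 4" "DD F (Et p) = 0" "AA F (Et p) = 0"
proof -
  have "set (attrs (Et p)) = trip (pof (Et p))" unfolding pof_Et by (simp add: Et_def trip_def)
  thus "II F (Et p) = F p 4" using S6(2)[OF Et_CC] pof_Et by simp
  show "DD F (Et p) = 0" "AA F (Et p) = 0" using S2[OF Et_CC Et_common] by simp_all
qed

lemma Rt_vals: "II F (Rt p) = F p 4" "AA F (Rt p) \<le> max (F p 1) (F p 2)"
  "F p 3 \<le> F p 4 \<Longrightarrow> F p 3 \<le> DD F (Rt p)"
proof -
  have "set (attrs (Rt p)) = trip (pof (Rt p))" unfolding pof_Rt by (simp add: Rt_def trip_def)
  thus "II F (Rt p) = F p 4" using S6(2)[OF Rt_CC] pof_Rt by simp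
  show "AA F (Rt p) \<le> max (F p 1) (F p 2)" using S7[OF Rt_CC] pof_Rt by simp
  assume m: "F p 3 \<le> F p 4"
  obtain \<Gamma>0 where "det_tree_for 3 (Rt p) \<Gamma>0" using det_ex[OF CC_valid[OF Rt_CC]] by auto
  then obtain \<Gamma> where "det_tree_for 3 (Rt p) \<Gamma>" "psi_tree (psiF F) \<Gamma> = DD F (Rt p)" using psiD_att by blast
  thus "F p 3 \<le> DD F (Rt p)" using Rt_lower[of F p, OF m] by metis
qed

lemma Ot_vals: "II F (Ot p) = F p 1" "DD F (Ot p) = F p 1" "AA F (Ot p) = F p 1"
proof -
  have I: "II F (Ot p) = F p 1" by (simp add: psiI psiF_def Ot_def lev_def)
  have "F p 1 \<le> AA F (Ot p)"
  proof (rule A_lower[OF CC_valid[OF Ot_CC] _ Ot_nc])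
    fix w :: "nat list" assume w: "w \<noteq> []" "set w \<subseteq> set (attrs (Ot p))"
    hence "set w \<subseteq> {3*p}" by (simp add: Ot_def)
    moreover obtain x where "x \<in> set w" using w(1) by (cases w) auto
    ultimately have sw: "set w = {3*p}" by blast
    hence h: "hd w = 3*p" using w(1) by (cases w) auto
    have "lev w = 1" unfolding lev_def using w(1) sw h by simp
    thus "F p 1 \<le> psiF F w" using w(1) h by (simp add: psiF_def)
  qed simp
  thus "II F (Ot p) = F p 1" "DD F (Ot p) = F p 1" "AA F (Ot p) = F p 1"
    using S4[OF Ot_CC[of p], of F] I by simp_all
qed


definition Ug :: "('a \<Rightarrow> nat) \<Rightarrow> ('a \<Rightarrow> nat) \<Rightarrow> 'a set \<Rightarrow> nat \<Rightarrow> nat option" where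
  "Ug X Y C n = (let S = {X T | T. T \<in> C \<and> Y T \<le> n} in if S \<noteq> {} \<and> finite S then Some (Max S) else None)"

lemma U_Ug: "U k C \<psi> b c = Ug (psi_of k \<psi> b) (psi_of k \<psi> c) C"
  by (rule ext) (simp add: U_def Ug_def)

lemma Ug_Some: assumes "Ug X Y C n = Some m"
  shows "\<exists>T\<in>C. Y T \<le> n \<and> X T = m" "\<And>T. T \<in> C \<Longrightarrow> Y T \<le> n \<Longrightarrow> X T \<le> m"
proof -
  let ?S = "{X T | T. T \<in> C \<and> Y T \<le> n}"
  have S: "?S \<noteq> {}" "finite ?S" "m = Max ?S" using assms unfolding Ug_def Let_def by (auto split: if_splits)
  have "Max ?S \<in> ?S" using S by (intro Max_in) auto
  thus "\<exists>T\<in>C. Y T \<le> n \<and> X T = m" using S by auto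
  fix T assume "T \<in> C" "Y T \<le> n"
  hence "X T \<in> ?S" by blast
  thus "X T \<le> m" using S by simp
qed

lemma Ug_fin: assumes "T0 \<in> C" "Y T0 \<le> n" and b: "\<And>T. T \<in> C \<Longrightarrow> Y T \<le> n \<Longrightarrow> X T \<le> B"
  shows "\<exists>m. Ug X Y C n = Some m"
proof -
  let ?S = "{X T | T. T \<in> C \<and> Y T \<le> n}"
  have "?S \<noteq> {}" using assms by blast
  moreover have "?S \<subseteq> {..B}" using b by auto
  hence "finite ?S" using finite_subset by blast
  ultimately show ?thesis unfolding Ug_def Let_def by simp
qed

lemma Ug_None: assumes "\<forall>M. \<exists>T\<in>C. Y T \<le> n \<and> M \<le> X T" shows "Ug X Y C n = None"
proof -
  let ?S = "{X T | T. T \<in> C \<and> Y T \<le> n}"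
  have "infinite ?S"
  proof
    assume f: "finite ?S"
    obtain T where "T \<in> C" "Y T \<le> n" "Suc (Max ?S) \<le> X T" using assms by blast
    hence "X T \<in> ?S" by blast
    hence "X T \<le> Max ?S" using f by simp
    thus False using \<open>Suc (Max ?S) \<le> X T\<close> by simp
  qed
  thus ?thesis unfolding Ug_def Let_def by simp
qed

lemma myinf: assumes "\<forall>M. \<exists>n\<in>S. M \<le> n" shows "infinite (S::nat set)"
proof
  assume "finite S"
  then obtain m where "\<forall>n\<in>S. n \<le> m" using finite_nat_set_iff_bounded_le by blast
  moreover obtain n where "n \<in> S" "Suc m \<le> n" using assms by blast
  ultimately show False by force
qed

lemma typ_gamma: assumes le: "\<forall>T\<in>C. X T \<le> Y T" and unb: "\<forall>M. \<exists>T\<in>C. M \<le> Y T \<and> X T = Y T"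
  shows "has_typ (Ug X Y C) T\<gamma>"
proof -
  have key: "Ug X Y C (Y T) = Some (Y T)" if T: "T \<in> C" "X T = Y T" for T
  proof -
    have b: "\<And>T'. T' \<in> C \<Longrightarrow> Y T' \<le> Y T \<Longrightarrow> X T' \<le> Y T" using le by (meson order_trans)
    obtain m where m: "Ug X Y C (Y T) = Some m" using Ug_fin[of T C Y "Y T" X "Y T", OF T(1) order_refl b] by blast
    have "m \<le> Y T" using Ug_Some(1)[OF m] le by force
    moreover have "X T \<le> m" using Ug_Some(2)[OF m T(1)] by simp
    ultimately show ?thesis using m T(2) by simp
  qed
  have "infinite {n. \<exists>T\<in>C. X T = Y T \<and> n = Y T}"
    using unb by (intro myinf) blast
  moreover have "{n. \<exists>T\<in>C. X T = Y T \<and> n = Y T} \<subseteq> pdom_plus (Ug X Y C)"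
    "{n. \<exists>T\<in>C. X T = Y T \<and> n = Y T} \<subseteq> pdom_minus (Ug X Y C)"
    unfolding pdom_plus_def pdom_minus_def using key by auto
  ultimately have "infinite (pdom_plus (Ug X Y C))" "infinite (pdom_minus (Ug X Y C))"
    using infinite_super by blast+
  thus ?thesis unfolding has_typ_def by simp
qed

lemma typ_eps: assumes "\<forall>n\<ge>N. \<forall>M. \<exists>T\<in>C. Y T \<le> n \<and> M \<le> X T"
  shows "has_typ (Ug X Y C) T\<epsilon>"
proof -
  have "pdom (Ug X Y C) \<subseteq> {..<N}"
  proof
    fix n assume "n \<in> pdom (Ug X Y C)"
    hence "Ug X Y C n \<noteq> None" unfolding pdom_def by simp
    show "n \<in> {..<N}"
    proof (rule ccontr)
      assume "n \<notin> {..<N}"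
      hence "n \<ge> N" by simp
      hence "Ug X Y C n = None" using assms by (intro Ug_None) blast
      thus False using \<open>Ug X Y C n \<noteq> None\<close> by simp
    qed
  qed
  thus ?thesis unfolding has_typ_def using finite_subset by auto
qed

lemma typ_alpha: assumes b: "\<forall>T\<in>C. X T \<le> B" and T0: "T0 \<in> C"
  shows "has_typ (Ug X Y C) T\<alpha>"
proof -
  have "{Y T0..} \<subseteq> pdom (Ug X Y C)"
  proof
    fix n assume "n \<in> {Y T0..}"
    hence "Y T0 \<le> n" by simp
    then obtain m where "Ug X Y C n = Some m" using Ug_fin[OF T0, of Y n X B] b by blast
    thus "n \<in> pdom (Ug X Y C)" unfolding pdom_def by simp
  qed
  hence "infinite (pdom (Ug X Y C))" using infinite_super infinite_Ici by blast
  moreover have "bdd_above_p (Ug X Y C)"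
    unfolding bdd_above_p_def
  proof (intro exI allI impI)
    fix n m assume "Ug X Y C n = Some m"
    then obtain T where "T \<in> C" "X T = m" using Ug_Some(1) by blast
    thus "m \<le> B" using b by blast
  qed
  ultimately show ?thesis unfolding has_typ_def by simp
qed

lemma typ_beta: assumes le: "\<forall>T\<in>C. X T \<le> Y T" and T0: "T0 \<in> C"
  and lt: "\<forall>T\<in>C. X T \<le> 1 \<or> X T < Y T" and unb: "\<forall>M. \<exists>T\<in>C. M \<le> X T"
  shows "has_typ (Ug X Y C) T\<beta>"
proof -
  have fin: "\<exists>m. Ug X Y C n = Some m" if "Y T \<le> n" "T \<in> C" for n T
  proof (rule Ug_fin[of T C Y n X n, OF that(2) that(1)])
    fix T' assume "T' \<in> C" "Y T' \<le> n" thus "X T' \<le> n" using le by (meson order_trans)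
  qed
  have "{Y T0..} \<subseteq> pdom (Ug X Y C)"
  proof
    fix n assume "n \<in> {Y T0..}"
    hence "Y T0 \<le> n" by simp
    then obtain m where "Ug X Y C n = Some m" using fin T0 by blast
    thus "n \<in> pdom (Ug X Y C)" unfolding pdom_def by simp
  qed
  hence "infinite (pdom (Ug X Y C))" using infinite_super infinite_Ici by blast
  moreover have "pdom_plus (Ug X Y C) \<subseteq> {..1}"
  proof
    fix n assume "n \<in> pdom_plus (Ug X Y C)"
    then obtain m where m: "Ug X Y C n = Some m" "n \<le> m" unfolding pdom_plus_def by blast
    then obtain T where "T \<in> C" "Y T \<le> n" "X T = m" using Ug_Some(1) by blast
    hence "m \<le> 1 \<or> m < Y T" using lt by blast
    thus "n \<in> {..1}" using m(2) \<open>Y T \<le> n\<close> by auto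
  qed
  hence "finite (pdom_plus (Ug X Y C))" using finite_subset by blast
  moreover have "\<not> bdd_above_p (Ug X Y C)"
  proof
    assume "bdd_above_p (Ug X Y C)"
    then obtain B where B: "\<forall>n m. Ug X Y C n = Some m \<longrightarrow> m \<le> B" unfolding bdd_above_p_def by blast
    obtain T where T: "T \<in> C" "Suc B \<le> X T" using unb by blast
    obtain m where m: "Ug X Y C (Y T) = Some m" using fin[OF order_refl T(1)] by blast
    have "X T \<le> m" using Ug_Some(2)[OF m T(1)] by simp
    hence "X T \<le> B" using B m by (meson order_trans)
    thus False using T by simp
  qed
  ultimately show ?thesis unfolding has_typ_def by simp
qed

lemma typ_delta: assumes g: "\<forall>n. \<forall>T\<in>C. Y T \<le> n \<longrightarrow> X T \<le> g n" and T0: "T0 \<in> C" "Y T0 = 0"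
  and big: "\<forall>n\<ge>1. \<exists>T\<in>C. Y T \<le> n \<and> n < X T"
  shows "has_typ (Ug X Y C) T\<delta>"
proof -
  have "UNIV \<subseteq> pdom (Ug X Y C)"
  proof
    fix n
    have "\<exists>m. Ug X Y C n = Some m"
    proof (rule Ug_fin[of T0 C Y n X "g n", OF T0(1)])
      show "Y T0 \<le> n" using T0 by simp
      fix T assume "T \<in> C" "Y T \<le> n" thus "X T \<le> g n" using g by blast
    qed
    then obtain m where "Ug X Y C n = Some m" by blast
    thus "n \<in> pdom (Ug X Y C)" unfolding pdom_def by simp
  qed
  hence "infinite (pdom (Ug X Y C))" using infinite_super infinite_UNIV_nat by blast
  moreover have "pdom_minus (Ug X Y C) \<subseteq> {0}"
  proof
    fix n assume "n \<in> pdom_minus (Ug X Y C)"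
    then obtain m where m: "Ug X Y C n = Some m" "m \<le> n" unfolding pdom_minus_def by blast
    show "n \<in> {0}"
    proof (rule ccontr)
      assume "n \<notin> {0}"
      hence "n \<ge> 1" by simp
      then obtain T where "T \<in> C" "Y T \<le> n" "n < X T" using big by blast
      hence "X T \<le> m" using Ug_Some(2)[OF m(1)] by simp
      thus False using m(2) \<open>n < X T\<close> by simp
    qed
  qed
  hence "finite (pdom_minus (Ug X Y C))" using finite_subset by blast
  ultimately show ?thesis unfolding has_typ_def by simp
qed


lemma Ueq: "U 3 CC \<psi> b c = Ug (psi_of 3 \<psi> b) (psi_of 3 \<psi> c) CC" by (rule U_Ug)

lemma AI: "T \<in> CC \<Longrightarrow> AA F T \<le> II F T" using S4[of T F] by simp

lemma Et_ex: "\<forall>M. \<exists>T\<in>CC. M \<le> F T \<and> G T = F T" if "\<And>M. M \<le> F (Et M)" "\<And>M. G (Et M) = F (Et M)" for F G :: "nat dtable \<Rightarrow> nat"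
  using that Et_CC by blast

lemma irow: assumes m: "\<And>M. M \<le> F M 4"
  shows "has_typ (Ug (II F) (II F) CC) T\<gamma>" "has_typ (Ug (II F) (DD F) CC) T\<epsilon>" "has_typ (Ug (II F) (AA F) CC) T\<epsilon>"
proof -
  have e: "Et M \<in> CC \<and> M \<le> II F (Et M) \<and> DD F (Et M) \<le> n \<and> AA F (Et M) \<le> n" for M n
    using Et_CC Et_vals m by simp
  show "has_typ (Ug (II F) (II F) CC) T\<gamma>"
  proof (rule typ_gamma)
    show "\<forall>M. \<exists>T\<in>CC. M \<le> II F T \<and> II F T = II F T" using e by blast
  qed simp
  show "has_typ (Ug (II F) (DD F) CC) T\<epsilon>"
    by (rule typ_eps[of 0]) (use e in blast)
  show "has_typ (Ug (II F) (AA F) CC) T\<epsilon>"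
    by (rule typ_eps[of 0]) (use e in blast)
qed

definition F3 :: "nat \<Rightarrow> nat \<Rightarrow> nat" where
  "F3 p l = (if l = 0 then 0 else if l \<le> 2 then 1 else if l = 3 then p+2 else p+3)"

lemma t3: "has_typ (U 3 CC (psiF F3) b c) (ttab 3 b c)"
proof -
  have ii: "has_typ (Ug (II F3) (II F3) CC) T\<gamma>" and id: "has_typ (Ug (II F3) (DD F3) CC) T\<epsilon>"
    and ia: "has_typ (Ug (II F3) (AA F3) CC) T\<epsilon>" by (rule irow; simp add: F3_def)+
  have lt: "DD F3 T \<le> 1 \<or> DD F3 T < II F3 T" if T: "T \<in> CC" for T
  proof (cases "set (attrs T) = trip (pof T)")
    case True thus ?thesis using S6[OF T True, of F3] by (simp add: F3_def)
  next
    case False thus ?thesis using S5[OF T False, of F3] by (simp add: F3_def)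
  qed
  have RD: "M + 2 \<le> DD F3 (Rt M)" for M using Rt_vals(3)[of F3 M] by (simp add: F3_def)
  have RA: "AA F3 (Rt M) \<le> 1" for M using Rt_vals(2)[of F3 M] by (simp add: F3_def)
  have di: "has_typ (Ug (DD F3) (II F3) CC) T\<beta>"
  proof (rule typ_beta[OF _ Et_CC])
    show "\<forall>T\<in>CC. DD F3 T \<le> II F3 T" using S4 by blast
    show "\<forall>T\<in>CC. DD F3 T \<le> 1 \<or> DD F3 T < II F3 T" using lt by blast
    show "\<forall>M. \<exists>T\<in>CC. M \<le> DD F3 T" using RD Rt_CC by (meson add_leD1)
  qed
  have dd: "has_typ (Ug (DD F3) (DD F3) CC) T\<gamma>"
    by (rule typ_gamma) (use RD Rt_CC in \<open>meson add_leD1 order_refl\<close>)+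
  have da: "has_typ (Ug (DD F3) (AA F3) CC) T\<epsilon>"
  proof (rule typ_eps[of 1], intro allI impI)
    fix n M :: nat assume "1 \<le> n"
    thus "\<exists>T\<in>CC. AA F3 T \<le> n \<and> M \<le> DD F3 T" using RD[of M] RA[of M] Rt_CC[of M] by force
  qed
  have AB: "\<forall>T\<in>CC. AA F3 T \<le> 1"
  proof
    fix T assume T: "T \<in> CC" show "AA F3 T \<le> 1" using S7[OF T, of F3] by (simp add: F3_def)
  qed
  have ai: "has_typ (Ug (AA F3) (II F3) CC) T\<alpha>" by (rule typ_alpha[OF AB Et_CC])
  have ad: "has_typ (Ug (AA F3) (DD F3) CC) T\<alpha>" by (rule typ_alpha[OF AB Et_CC])
  have aa: "has_typ (Ug (AA F3) (AA F3) CC) T\<alpha>" by (rule typ_alpha[OF AB Et_CC])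
  show ?thesis by (cases b; cases c) (simp_all add: Ueq ttab_def row3_def ii id ia di dd da ai ad aa)
qed

definition F4 :: "nat \<Rightarrow> nat \<Rightarrow> nat" where
  "F4 p l = (if l = 0 then 0 else if l \<le> 2 then 1 else p+2)"

lemma t4: "has_typ (U 3 CC (psiF F4) b c) (ttab 4 b c)"
proof -
  have ii: "has_typ (Ug (II F4) (II F4) CC) T\<gamma>" and id: "has_typ (Ug (II F4) (DD F4) CC) T\<epsilon>"
    and ia: "has_typ (Ug (II F4) (AA F4) CC) T\<epsilon>" by (rule irow; simp add: F4_def)+
  have RD: "DD F4 (Rt M) = M + 2" "II F4 (Rt M) = M + 2" for M
    using Rt_vals(3)[of F4 M] Rt_vals(1)[of F4 M] S4(1)[OF Rt_CC[of M], of F4] by (simp_all add: F4_def)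
  have RA: "AA F4 (Rt M) \<le> 1" for M using Rt_vals(2)[of F4 M] by (simp add: F4_def)
  have di: "has_typ (Ug (DD F4) (II F4) CC) T\<gamma>"
  proof (rule typ_gamma)
    show "\<forall>T\<in>CC. DD F4 T \<le> II F4 T" using S4 by blast
    show "\<forall>M. \<exists>T\<in>CC. M \<le> II F4 T \<and> DD F4 T = II F4 T"
    proof
      fix M show "\<exists>T\<in>CC. M \<le> II F4 T \<and> DD F4 T = II F4 T" using RD[of M] Rt_CC[of M] by force
    qed
  qed
  have dd: "has_typ (Ug (DD F4) (DD F4) CC) T\<gamma>"
  proof (rule typ_gamma)
    show "\<forall>M. \<exists>T\<in>CC. M \<le> DD F4 T \<and> DD F4 T = DD F4 T"
    proof
      fix M show "\<exists>T\<in>CC. M \<le> DD F4 T \<and> DD F4 T = DD F4 T" using RD[of M] Rt_CC[of M] by force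
    qed
  qed simp
  have da: "has_typ (Ug (DD F4) (AA F4) CC) T\<epsilon>"
  proof (rule typ_eps[of 1], intro allI impI)
    fix n M :: nat assume "1 \<le> n"
    thus "\<exists>T\<in>CC. AA F4 T \<le> n \<and> M \<le> DD F4 T" using RD[of M] RA[of M] Rt_CC[of M] by force
  qed
  have AB: "\<forall>T\<in>CC. AA F4 T \<le> 1"
  proof
    fix T assume T: "T \<in> CC" show "AA F4 T \<le> 1" using S7[OF T, of F4] by (simp add: F4_def)
  qed
  have ai: "has_typ (Ug (AA F4) (II F4) CC) T\<alpha>" by (rule typ_alpha[OF AB Et_CC])
  have ad: "has_typ (Ug (AA F4) (DD F4) CC) T\<alpha>" by (rule typ_alpha[OF AB Et_CC])
  have aa: "has_typ (Ug (AA F4) (AA F4) CC) T\<alpha>" by (rule typ_alpha[OF AB Et_CC])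
  show ?thesis by (cases b; cases c) (simp_all add: Ueq ttab_def row3_def ii id ia di dd da ai ad aa)
qed

lemma gam_O: assumes le: "\<forall>T\<in>CC. X T \<le> Y T" and XO: "\<And>M. X (Ot (h M)) = Y (Ot (h M))" and YO: "\<And>M. M \<le> Y (Ot (h M))"
  shows "has_typ (Ug X Y CC) T\<gamma>"
proof (rule typ_gamma[OF le])
  show "\<forall>M. \<exists>T\<in>CC. M \<le> Y T \<and> X T = Y T"
  proof
    fix M show "\<exists>T\<in>CC. M \<le> Y T \<and> X T = Y T" using XO[of M] YO[of M] Ot_CC[of "h M"] by blast
  qed
qed

definition F5 :: "nat \<Rightarrow> nat \<Rightarrow> nat" where
  "F5 p l = (if l = 0 then 0 else p+1)"

lemma t5: "has_typ (U 3 CC (psiF F5) b c) (ttab 5 b c)"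
proof -
  have ii: "has_typ (Ug (II F5) (II F5) CC) T\<gamma>" and id: "has_typ (Ug (II F5) (DD F5) CC) T\<epsilon>"
    and ia: "has_typ (Ug (II F5) (AA F5) CC) T\<epsilon>" by (rule irow; simp add: F5_def)+
  have O: "II F5 (Ot M) = M+1" "DD F5 (Ot M) = M+1" "AA F5 (Ot M) = M+1" for M
    using Ot_vals[of F5 M] by (simp_all add: F5_def)
  have DA: "\<forall>T\<in>CC. DD F5 T \<le> AA F5 T"
  proof
    fix T assume T: "T \<in> CC"
    show "DD F5 T \<le> AA F5 T"
    proof (cases "common T")
      case True thus ?thesis using S2[OF T] by simp
    next
      case False
      have "pof T + 1 \<le> AA F5 T" by (rule S3[OF T False]) (simp add: F5_def)
      moreover have "II F5 T = pof T + 1" using S1(1)[OF T, of F5] S1(2)[OF T] by (auto simp: F5_def)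
      ultimately show ?thesis using S4(1)[OF T, of F5] by simp
    qed
  qed
  have DI: "\<forall>T\<in>CC. DD F5 T \<le> II F5 T" and AD: "\<forall>T\<in>CC. AA F5 T \<le> DD F5 T" and AI': "\<forall>T\<in>CC. AA F5 T \<le> II F5 T"
    using S4 AI by blast+
  have di: "has_typ (Ug (DD F5) (II F5) CC) T\<gamma>" by (rule gam_O[OF DI, of id]) (simp_all add: O)
  have dd: "has_typ (Ug (DD F5) (DD F5) CC) T\<gamma>" by (rule gam_O[of _ _ id]) (simp_all add: O)
  have da: "has_typ (Ug (DD F5) (AA F5) CC) T\<gamma>" by (rule gam_O[OF DA, of id]) (simp_all add: O)
  have ai: "has_typ (Ug (AA F5) (II F5) CC) T\<gamma>" by (rule gam_O[OF AI', of id]) (simp_all add: O)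
  have ad: "has_typ (Ug (AA F5) (DD F5) CC) T\<gamma>" by (rule gam_O[OF AD, of id]) (simp_all add: O)
  have aa: "has_typ (Ug (AA F5) (AA F5) CC) T\<gamma>" by (rule gam_O[of _ _ id]) (simp_all add: O)
  show ?thesis by (cases b; cases c) (simp_all add: Ueq ttab_def row3_def ii id ia di dd da ai ad aa)
qed

definition F6 :: "nat \<Rightarrow> nat \<Rightarrow> nat" where
  "F6 p l = (if l = 0 then 0 else if l \<le> 2 then p+1 else 2*p+2)"

lemma t6: "has_typ (U 3 CC (psiF F6) b c) (ttab 6 b c)"
proof -
  have ii: "has_typ (Ug (II F6) (II F6) CC) T\<gamma>" and id: "has_typ (Ug (II F6) (DD F6) CC) T\<epsilon>"
    and ia: "has_typ (Ug (II F6) (AA F6) CC) T\<epsilon>" by (rule irow; simp add: F6_def)+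
  have O: "II F6 (Ot M) = M+1" "DD F6 (Ot M) = M+1" "AA F6 (Ot M) = M+1" for M
    using Ot_vals[of F6 M] by (simp_all add: F6_def)
  have DI: "\<forall>T\<in>CC. DD F6 T \<le> II F6 T" and AD: "\<forall>T\<in>CC. AA F6 T \<le> DD F6 T" and AI': "\<forall>T\<in>CC. AA F6 T \<le> II F6 T"
    using S4 AI by blast+
  have di: "has_typ (Ug (DD F6) (II F6) CC) T\<gamma>" by (rule gam_O[OF DI, of id]) (simp_all add: O)
  have dd: "has_typ (Ug (DD F6) (DD F6) CC) T\<gamma>" by (rule gam_O[of _ _ id]) (simp_all add: O)
  have ai: "has_typ (Ug (AA F6) (II F6) CC) T\<gamma>" by (rule gam_O[OF AI', of id]) (simp_all add: O)
  have ad: "has_typ (Ug (AA F6) (DD F6) CC) T\<gamma>" by (rule gam_O[OF AD, of id]) (simp_all add: O)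
  have aa: "has_typ (Ug (AA F6) (AA F6) CC) T\<gamma>" by (rule gam_O[of _ _ id]) (simp_all add: O)
  have da: "has_typ (Ug (DD F6) (AA F6) CC) T\<delta>"
  proof (rule typ_delta[of CC "AA F6" "DD F6" "\<lambda>n. 2*n" "Et 0"])
    show "\<forall>n. \<forall>T\<in>CC. AA F6 T \<le> n \<longrightarrow> DD F6 T \<le> 2*n"
    proof (intro allI ballI impI)
      fix n T assume T: "T \<in> CC" and A: "AA F6 T \<le> n"
      show "DD F6 T \<le> 2*n"
      proof (cases "common T")
        case True thus ?thesis using S2[OF T] by simp
      next
        case False
        have "pof T + 1 \<le> AA F6 T" by (rule S3[OF T False]) (simp add: F6_def)
        moreover have "II F6 T \<le> 2 * pof T + 2" using S1(1)[OF T, of F6] S1(2)[OF T] by (auto simp: F6_def)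
        ultimately show ?thesis using S4(1)[OF T, of F6] A by simp
      qed
    qed
    show "Et 0 \<in> CC" by (rule Et_CC)
    show "AA F6 (Et 0) = 0" by (rule Et_vals)
    show "\<forall>n\<ge>1. \<exists>T\<in>CC. AA F6 T \<le> n \<and> n < DD F6 T"
    proof (intro allI impI)
      fix n :: nat assume n: "1 \<le> n"
      have "AA F6 (Rt (n-1)) \<le> n" using Rt_vals(2)[of F6 "n-1"] n by (simp add: F6_def)
      moreover have "2*n \<le> DD F6 (Rt (n-1))" using Rt_vals(3)[of F6 "n-1"] n by (simp add: F6_def)
      ultimately show "\<exists>T\<in>CC. AA F6 T \<le> n \<and> n < DD F6 T" using Rt_CC n by force
    qed
  qed
  show ?thesis by (cases b; cases c) (simp_all add: Ueq ttab_def row3_def ii id ia di dd da ai ad aa)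
qed

definition F7 :: "nat \<Rightarrow> nat \<Rightarrow> nat" where
  "F7 p l = (if even p then F4 p l else F5 p l)"

lemma t7: "has_typ (U 3 CC (psiF F7) b c) (ttab 7 b c)"
proof -
  have ii: "has_typ (Ug (II F7) (II F7) CC) T\<gamma>" and id: "has_typ (Ug (II F7) (DD F7) CC) T\<epsilon>"
    and ia: "has_typ (Ug (II F7) (AA F7) CC) T\<epsilon>" by (rule irow; simp add: F7_def F4_def F5_def)+
  let ?h = "\<lambda>M. Suc (2*M)"
  have O: "II F7 (Ot (?h M)) = 2*M+2" "DD F7 (Ot (?h M)) = 2*M+2" "AA F7 (Ot (?h M)) = 2*M+2" for M
    using Ot_vals[of F7 "?h M"] by (simp_all add: F7_def F5_def)
  have DI: "\<forall>T\<in>CC. DD F7 T \<le> II F7 T" and AD: "\<forall>T\<in>CC. AA F7 T \<le> DD F7 T" and AI': "\<forall>T\<in>CC. AA F7 T \<le> II F7 T"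
    using S4 AI by blast+
  have di: "has_typ (Ug (DD F7) (II F7) CC) T\<gamma>" by (rule gam_O[OF DI, of ?h]) (simp_all add: O)
  have dd: "has_typ (Ug (DD F7) (DD F7) CC) T\<gamma>" by (rule gam_O[of _ _ ?h]) (simp_all add: O)
  have ai: "has_typ (Ug (AA F7) (II F7) CC) T\<gamma>" by (rule gam_O[OF AI', of ?h]) (simp_all add: O)
  have ad: "has_typ (Ug (AA F7) (DD F7) CC) T\<gamma>" by (rule gam_O[OF AD, of ?h]) (simp_all add: O)
  have aa: "has_typ (Ug (AA F7) (AA F7) CC) T\<gamma>" by (rule gam_O[of _ _ ?h]) (simp_all add: O)
  have RD: "2*M + 2 \<le> DD F7 (Rt (2*M))" for M using Rt_vals(3)[of F7 "2*M"] by (simp add: F7_def F4_def)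
  have RA: "AA F7 (Rt (2*M)) \<le> 1" for M using Rt_vals(2)[of F7 "2*M"] by (simp add: F7_def F4_def)
  have da: "has_typ (Ug (DD F7) (AA F7) CC) T\<epsilon>"
  proof (rule typ_eps[of 1], intro allI impI)
    fix n M :: nat assume "1 \<le> n"
    thus "\<exists>T\<in>CC. AA F7 T \<le> n \<and> M \<le> DD F7 T" using RD[of M] RA[of M] Rt_CC[of "2*M"] by force
  qed
  show ?thesis by (cases b; cases c) (simp_all add: Ueq ttab_def row3_def ii id ia di dd da ai ad aa)
qed


lemma t1: "has_typ (U 3 CC (\<lambda>w. 0) b c) (ttab 1 b c)"
proof -
  have z: "\<forall>T\<in>CC. psi_of 3 (\<lambda>w. 0) x T \<le> 0" for x
  proof
    fix T assume T: "T \<in> CC"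
    have v: "valid_table 3 T" using CC_valid[OF T] .
    have "psi_of 3 (\<lambda>w. 0) CD T \<le> psi_of 3 (\<lambda>w. 0) CI T" using D_le_I[OF v] by simp
    moreover have "psi_of 3 (\<lambda>w. 0) CA T \<le> psi_of 3 (\<lambda>w. 0) CD T" using A_le_D[OF v] by simp
    ultimately show "psi_of 3 (\<lambda>w. 0) x T \<le> 0" by (cases x) (simp_all add: psiI)
  qed
  have "has_typ (U 3 CC (\<lambda>w. 0) b c) T\<alpha>" unfolding Ueq by (rule typ_alpha[OF z Et_CC])
  thus ?thesis by (cases b; cases c) (simp_all add: ttab_def row3_def)
qed

lemma t2: "has_typ (U 3 CC length b c) (ttab 2 b c)"
proof -
  have D3: "psi_of 3 length CD T \<le> 3" if T: "T \<in> CC" for T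
  proof -
    have v: "valid_table 3 T" using CC_valid[OF T] .
    have "psi_of 3 length CD T \<le> length (remdups (attrs T))" using D_le_fs[OF v, of "remdups (attrs T)"] by simp
    also have "\<dots> = card (set (attrs T))" by (simp add: length_remdups_card_conv)
    also have "\<dots> \<le> card (trip (pof T))" using CC_trip[OF T] by (intro card_mono) (auto simp: trip_def)
    finally show ?thesis using card_trip by simp
  qed
  have A3: "psi_of 3 length CA T \<le> 3" if T: "T \<in> CC" for T
    using D3[OF T] A_le_D[OF CC_valid[OF T], of length] by simp
  have Z: "Zt M \<in> CC \<and> M \<le> psi_of 3 length CI (Zt M) \<and> psi_of 3 length CD (Zt M) \<le> n \<and> psi_of 3 length CA (Zt M) \<le> n" for M n
    using Zt_CC common_tree[OF CC_valid[OF Zt_CC] Zt_common, of length] by (simp add: psiI Zt_def)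
  have ii: "has_typ (U 3 CC length CI CI) T\<gamma>" unfolding Ueq
  proof (rule typ_gamma)
    show "\<forall>M. \<exists>T\<in>CC. M \<le> psi_of 3 length CI T \<and> psi_of 3 length CI T = psi_of 3 length CI T"
      using Z by blast
  qed simp
  have id: "has_typ (U 3 CC length CI CD) T\<epsilon>" unfolding Ueq by (rule typ_eps[of 0]) (use Z in blast)
  have ia: "has_typ (U 3 CC length CI CA) T\<epsilon>" unfolding Ueq by (rule typ_eps[of 0]) (use Z in blast)
  have d: "has_typ (U 3 CC length CD x) T\<alpha>" for x unfolding Ueq by (rule typ_alpha[OF _ Et_CC]) (use D3 in blast)
  have a: "has_typ (U 3 CC length CA x) T\<alpha>" for x unfolding Ueq by (rule typ_alpha[OF _ Et_CC]) (use A3 in blast)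
  show ?thesis by (cases b; cases c) (simp_all add: ttab_def row3_def ii id ia d a)
qed

lemma fin_help: fixes C :: "nat dtable set" and \<psi> :: "nat list \<Rightarrow> nat" assumes a: "closed_class 3 C" and b: "\<And>b c. has_typ (U 3 C \<psi> b c) (ttab j b c)"
  shows "\<exists>k::nat. k \<ge> 2 \<and> (\<exists>(C :: nat dtable set) (\<psi> :: nat list \<Rightarrow> nat).
           closed_class k C \<and> (\<forall>b c. has_typ (U k C \<psi> b c) (ttab j b c)))"
proof -
  have "closed_class 3 C \<and> (\<forall>b c. has_typ (U 3 C \<psi> b c) (ttab j b c))" using a b by blast
  hence "\<exists>(C :: nat dtable set) (\<psi> :: nat list \<Rightarrow> nat). closed_class 3 C \<and> (\<forall>b c. has_typ (U 3 C \<psi> b c) (ttab j b c))"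
    by blast
  moreover have "(2::nat) \<le> 3" by simp
  ultimately show ?thesis by blast
qed

theorem proposition3:
  assumes "j \<in> {1..7::nat}"
  shows "\<exists>k::nat. k \<ge> 2 \<and> (\<exists>(C :: nat dtable set) (\<psi> :: nat list \<Rightarrow> nat).
           closed_class k C \<and> (\<forall>b c. has_typ (U k C \<psi> b c) (ttab j b c)))"
proof -
  have "j = 1 \<or> j = 2 \<or> j = 3 \<or> j = 4 \<or> j = 5 \<or> j = 6 \<or> j = 7" using assms by auto
  thus ?thesis
  proof (elim disjE)
    assume "j = 1" thus ?thesis using fin_help[OF closed_CC t1] by simp
  next
    assume "j = 2" thus ?thesis using fin_help[OF closed_CC t2] by simp
  next
    assume "j = 3" thus ?thesis using fin_help[OF closed_CC t3] by simp
  next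
    assume "j = 4" thus ?thesis using fin_help[OF closed_CC t4] by simp
  next
    assume "j = 5" thus ?thesis using fin_help[OF closed_CC t5] by simp
  next
    assume "j = 6" thus ?thesis using fin_help[OF closed_CC t6] by simp
  next
    assume "j = 7" thus ?thesis using fin_help[OF closed_CC t7] by simp
  qed
qed


end
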